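(* Let $0<\alpha<1$, $\lambda\ge0$, $v>0$, $D>0$, $T,L>0$, $r\ge1$, integers $n\ge1$, $K\ge2$, $h=L/K$, $x_i=ih$, $t_j=(j/n)^rT$, $\tau_j=t_{j+1}-t_j$, and $$a_{j,k}=\left( \frac{k^r-j^r}{(j+1)^r-j^r}\right)^{1-\alpha}-\left(\frac{k^r-(j+1)^r}{(j+1)^r-j^r}\right)^{1-\alpha}.$$ Let $y$ be the solution of $D_t^{\alpha}y=-v\,\partial_x y+D\,\partial_x^2 y+e^{\lambda t}f(x,t)$ on $(0,L)\times(0,T]$, $y(x,0)=g(x)$, $y(0,t)=y(L,t)=0$, and let $(Y_i^l)$ be the solution of the scheme $$\frac{1}{\Gamma(2-\alpha)}\sum_{j=0}^{l-1} \tau_{j}^{-\alpha}a_{j,l}\left(Y_i^{j+1}-Y_i^{j}\right)=-v \frac{Y_{i+1}^l-Y_{i-1}^l}{2h}+D\frac{Y_{i+1}^l-2Y_{i}^l+Y_{i-1}^l}{h^2}+e^{\lambda t_l}f(x_i,t_l),$$ $i=1,\ldots,K-1$, $l=1,\ldots,n$, with $Y_0^l=Y_K^l=0$, $Y_i^0=g(x_i)$. Let $\mathbf{e}^l=(y(x_1,t_l)-Y_1^l,\ldots,y(x_{K-1},t_l)-Y_{K-1}^l)^T$ and $\beta=-\min\{2-\alpha,r\alpha\}$. Then there exists a positive constant $C$ not depending on $n$ and $h$ such that $$\left\|\mathbf{e}^l\right\|_{\infty} \le C(n^{\beta}+h^2),\qquad l=1,\ldots,n.$$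
   Context: $D_t^\alpha$ denotes the Caputo derivative $D_t^\alpha y(t)=\frac{1}{\Gamma(1-\alpha)}\int_0^t (t-s)^{-\alpha}\partial_s y(s)\,ds$ in $t$; $f,g$ are continuous. Standing assumptions of the paper on the exact solution: $y$ has continuous partial derivatives up to fourth order in $x$, and there is $C>0$ with $\left|\partial_t^{\ell}y(x,t)\right|\le C(1+t^{\alpha-\ell})$ for $\ell=0,1,2$ and all $(x,t)\in[0,L]\times(0,T]$. $\|\cdot\|_\infty$ is the maximum norm over components. The solution of the tempered problem $\mathbb{D}_t^{\alpha,\lambda}u=-v\partial_xu+D\partial_x^2u+f$, $\mathbb{D}_t^{\alpha,\lambda}u=e^{-\lambda t}D_t^\alpha(e^{\lambda t}u)$, with the same initial/boundary data is $u=e^{-\lambda t}y$. *)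

theory Defs
  imports "HOL-Analysis.Analysis"
begin

definition caputo :: "real \<Rightarrow> (real \<Rightarrow> real) \<Rightarrow> real \<Rightarrow> real" where
  "caputo \<alpha> dy t = integral {0..t} (\<lambda>s. (t - s) powr (-\<alpha>) * dy s) / Gamma (1 - \<alpha>)"

definition tmesh :: "real \<Rightarrow> real \<Rightarrow> nat \<Rightarrow> nat \<Rightarrow> real" where
  "tmesh T r n j = (real j / real n) powr r * T"

definition tau :: "real \<Rightarrow> real \<Rightarrow> nat \<Rightarrow> nat \<Rightarrow> real" where
  "tau T r n j = tmesh T r n (Suc j) - tmesh T r n j"

definition acoef :: "real \<Rightarrow> real \<Rightarrow> nat \<Rightarrow> nat \<Rightarrow> real" where
  "acoef \<alpha> r j k =
     ((real k powr r - real j powr r) / (real (Suc j) powr r - real j powr r)) powr (1 - \<alpha>)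
   - ((real k powr r - real (Suc j) powr r) / (real (Suc j) powr r - real j powr r)) powr (1 - \<alpha>)"

definition is_scheme_solution ::
  "real \<Rightarrow> real \<Rightarrow> real \<Rightarrow> real \<Rightarrow> real \<Rightarrow> real \<Rightarrow> real \<Rightarrow>
   (real \<Rightarrow> real \<Rightarrow> real) \<Rightarrow> (real \<Rightarrow> real) \<Rightarrow> nat \<Rightarrow> nat \<Rightarrow> (nat \<Rightarrow> nat \<Rightarrow> real) \<Rightarrow> bool" where
  "is_scheme_solution \<alpha> lam v D T L r f g n K Y \<longleftrightarrow>
     (let h = L / real K in
       (\<forall>l\<in>{1..n}. Y 0 l = 0 \<and> Y K l = 0) \<and>
       (\<forall>i\<in>{0..K}. Y i 0 = g (real i * h)) \<and>
       (\<forall>i\<in>{1..K-1}. \<forall>l\<in>{1..n}.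
          (1 / Gamma (2 - \<alpha>)) * (\<Sum>j<l. tau T r n j powr (-\<alpha>) * acoef \<alpha> r j l * (Y i (Suc j) - Y i j))
          = - v * (Y (i+1) l - Y (i-1) l) / (2 * h)
            + D * (Y (i+1) l - 2 * Y i l + Y (i-1) l) / h^2
            + exp (lam * tmesh T r n l) * f (real i * h) (tmesh T r n l)))"

end

theory Submission
  imports Defs
begin

lemma powr_mvt:
  fixes a b p :: real
  assumes "0 \<le> b" "b < a" "0 < p"
  shows "\<exists>z. b < z \<and> z < a \<and> a powr p - b powr p = (a - b) * (p * z powr (p - 1))"
proof -
  have c: "continuous_on {b..a} (\<lambda>u. u powr p)"
    by (rule continuous_on_powr') (use assms in \<open>auto intro!: continuous_intros\<close>)
  have d: "\<And>x. b < x \<Longrightarrow> x < a \<Longrightarrow> (\<lambda>u. u powr p) differentiable (at x)"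
    using has_real_derivative_powr assms real_differentiable_def
    by (metis le_less_trans)
  obtain l z where lz: "b < z" "z < a" "DERIV (\<lambda>u. u powr p) z :> l" "a powr p - b powr p = (a - b) * l"
    using MVT[OF assms(2) c d] by blast
  have "DERIV (\<lambda>u. u powr p) z :> p * z powr (p - 1)"
    using has_real_derivative_powr lz assms by (metis le_less_trans)
  then have "l = p * z powr (p - 1)" using lz(3) DERIV_unique by blast
  then show ?thesis using lz by blast
qed

lemma conc_lower:
  fixes a b p :: real
  assumes "0 < p" "p < 1" "0 \<le> b" "b \<le> a" "0 < a"
  shows "p * a powr (p - 1) * (a - b) \<le> a powr p - b powr p"
proof (cases "b = a")
  case False
  then obtain z where z: "b < z" "z < a" "a powr p - b powr p = (a - b) * (p * z powr (p - 1))"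
    using powr_mvt[of b a p] assms by force
  have "a powr (p - 1) \<le> z powr (p - 1)"
    using powr_mono2'[of "p - 1" z a] assms z by auto
  then show ?thesis using z assms by (simp add: mult_left_mono mult.commute mult.left_commute)
qed simp

lemma conc_upper:
  fixes a b p :: real
  assumes "0 < p" "p < 1" "0 < b" "b \<le> a"
  shows "a powr p - b powr p \<le> p * b powr (p - 1) * (a - b)"
proof (cases "b = a")
  case False
  then obtain z where z: "b < z" "z < a" "a powr p - b powr p = (a - b) * (p * z powr (p - 1))"
    using powr_mvt[of b a p] assms by force
  have "z powr (p - 1) \<le> b powr (p - 1)"
    using powr_mono2'[of "p - 1" b z] assms z by auto
  then show ?thesis using z assms by (simp add: mult_left_mono mult.commute mult.left_commute)
qed simp

lemma conv_upper:
  fixes a b p :: real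
  assumes "1 \<le> p" "0 \<le> b" "b \<le> a"
  shows "a powr p - b powr p \<le> p * a powr (p - 1) * (a - b)"
proof (cases "b = a")
  case False
  then obtain z where z: "b < z" "z < a" "a powr p - b powr p = (a - b) * (p * z powr (p - 1))"
    using powr_mvt[of b a p] assms by force
  have "z powr (p - 1) \<le> a powr (p - 1)"
    using powr_mono2[of "p - 1" z a] assms z by auto
  then show ?thesis using z assms by (simp add: mult_left_mono mult.commute mult.left_commute)
qed simp

locale mesh =
  fixes T r :: real and n :: nat
  assumes T_pos: "0 < T" and r_ge: "1 \<le> r" and n_ge: "1 \<le> n"
begin

abbreviation "tm \<equiv> tmesh T r n"
abbreviation "ta \<equiv> tau T r n"

lemma tm_eq: "tm j = T * real j powr r / real n powr r"
  unfolding tmesh_def by (simp add: powr_divide)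

lemma tm_0[simp]: "tm 0 = 0"
  unfolding tmesh_def using r_ge by simp

lemma n_pos: "0 < real n" using n_ge by simp

lemma tm_nonneg: "0 \<le> tm j"
  unfolding tmesh_def using T_pos by simp

lemma tm_less: "i < j \<Longrightarrow> tm i < tm j"
  unfolding tm_eq using T_pos n_pos r_ge
  by (auto intro!: divide_strict_right_mono mult_strict_left_mono powr_less_mono2)

lemma tm_mono: "i \<le> j \<Longrightarrow> tm i \<le> tm j"
  using tm_less[of i j] by (cases "i = j") auto

lemma tm_pos: "0 < j \<Longrightarrow> 0 < tm j"
  using tm_less[of 0 j] by simp

lemma tm_n: "tm n = T"
  unfolding tmesh_def using n_pos by simp

lemma tm_le_T: "j \<le> n \<Longrightarrow> tm j \<le> T"
  using tm_mono tm_n by metis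

lemma ta_pos: "0 < ta j"
  unfolding tau_def using tm_less by simp

lemma ta_eq: "ta j = T * (real (Suc j) powr r - real j powr r) / real n powr r"
  unfolding tau_def tm_eq by (simp add: diff_divide_distrib right_diff_distrib)

lemma ta_upper: "ta j \<le> r * T * real (Suc j) powr (r - 1) / real n powr r"
proof -
  have "real (Suc j) powr r - real j powr r \<le> r * real (Suc j) powr (r - 1) * (real (Suc j) - real j)"
    by (rule conv_upper) (use r_ge in auto)
  then show ?thesis unfolding ta_eq using T_pos n_pos
    by (simp add: divide_right_mono mult.commute mult.left_commute)
qed

lemma ta_last_lower:
  assumes "1 \<le> l"
  shows "T * real l powr (r - 1) / real n powr r \<le> ta (l - 1)"
proof -
  have l: "real l = real (l - 1) + 1" using assms by simp
  have "real (l - 1) powr (r - 1) \<le> real l powr (r - 1)"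
    by (rule powr_mono2) (use r_ge in auto)
  then have "real (l - 1) * real (l - 1) powr (r - 1) \<le> real (l - 1) * real l powr (r - 1)"
    by (simp add: mult_left_mono)
  moreover have "real (l - 1) powr r = real (l - 1) * real (l - 1) powr (r - 1)"
    using r_ge by (cases "l - 1 = 0") (auto simp: powr_mult_base)
  moreover have "real l powr r = real l * real l powr (r - 1)"
    using assms by (simp add: powr_mult_base)
  ultimately have "real l powr (r - 1) \<le> real l powr r - real (l - 1) powr r"
    by (simp add: l algebra_simps)
  then show ?thesis
    unfolding ta_eq using assms T_pos n_pos
    by (simp add: divide_right_mono)
qed

definition bc :: "real \<Rightarrow> nat \<Rightarrow> nat \<Rightarrow> real" where
  "bc \<alpha> l j = ((tm l - tm j) powr (1 - \<alpha>) - (tm l - tm (Suc j)) powr (1 - \<alpha>)) / (ta j * Gamma (2 - \<alpha>))"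

lemma bc_eq:
  assumes "j < l" "\<alpha> < 1"
  shows "ta j powr (- \<alpha>) * acoef \<alpha> r j l / Gamma (2 - \<alpha>) = bc \<alpha> l j"
proof -
  let ?c = "T / real n powr r"
  have c: "0 < ?c" using T_pos n_pos by simp
  have dj: "real (Suc j) powr r - real j powr r > 0"
    using ta_pos[of j] T_pos n_pos unfolding ta_eq by (simp add: zero_less_divide_iff zero_less_mult_iff)
  have e1: "(real l powr r - real j powr r) / (real (Suc j) powr r - real j powr r) = (tm l - tm j) / ta j"
    unfolding ta_eq tm_eq using c dj T_pos n_pos by (simp add: field_simps)
  have e2: "(real l powr r - real (Suc j) powr r) / (real (Suc j) powr r - real j powr r) = (tm l - tm (Suc j)) / ta j"
    unfolding ta_eq tm_eq using c dj T_pos n_pos by (simp add: field_simps)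
  have A: "0 \<le> tm l - tm j" "0 \<le> tm l - tm (Suc j)" using tm_mono assms by auto
  have tp: "0 < ta j" by (rule ta_pos)
  have "ta j powr (- \<alpha>) * acoef \<alpha> r j l
     = ta j powr (- \<alpha>) * (((tm l - tm j) powr (1 - \<alpha>) - (tm l - tm (Suc j)) powr (1 - \<alpha>)) / ta j powr (1 - \<alpha>))"
  proof -
    have "((tm l - tm j) / ta j) powr (1 - \<alpha>) = (tm l - tm j) powr (1 - \<alpha>) / ta j powr (1 - \<alpha>)"
      "((tm l - tm (Suc j)) / ta j) powr (1 - \<alpha>) = (tm l - tm (Suc j)) powr (1 - \<alpha>) / ta j powr (1 - \<alpha>)"
      using A tp by (auto intro!: powr_divide)
    then show ?thesis unfolding acoef_def e1 e2 by (simp add: diff_divide_distrib)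
  qed
  also have "\<dots> = ((tm l - tm j) powr (1 - \<alpha>) - (tm l - tm (Suc j)) powr (1 - \<alpha>)) / ta j"
  proof -
    have "ta j powr (- \<alpha>) / ta j powr (1 - \<alpha>) = 1 / ta j"
    proof -
      have "ta j powr (- \<alpha>) / ta j powr (1 - \<alpha>) = ta j powr (- \<alpha> - (1 - \<alpha>))"
        by (rule powr_diff[symmetric])
      also have "- \<alpha> - (1 - \<alpha>) = -1" by simp
      finally show ?thesis using tp by (simp add: powr_minus_divide)
    qed
    moreover have "\<And>X. ta j powr (- \<alpha>) * (X / ta j powr (1 - \<alpha>)) = X * (ta j powr (- \<alpha>) / ta j powr (1 - \<alpha>))"
      by (simp add: ac_simps)
    ultimately show ?thesis by simp
  qed
  finally show ?thesis unfolding bc_def by simp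
qed

end

lemma Gamma_2_minus:
  fixes \<alpha> :: real assumes "\<alpha> < 1"
  shows "Gamma (2 - \<alpha>) = (1 - \<alpha>) * Gamma (1 - \<alpha>)"
proof -
  have "(1 - \<alpha>) \<notin> \<int>\<^sub>\<le>\<^sub>0" using assms by (auto elim!: nonpos_Ints_cases)
  from Gamma_plus1[OF this] show ?thesis by (simp add: algebra_simps)
qed

lemma kernel_has_integral:
  fixes a b t \<alpha> :: real
  assumes "a \<le> b" "b \<le> t" "0 < \<alpha>" "\<alpha> < 1"
  shows "((\<lambda>s. (t - s) powr (- \<alpha>)) has_integral
           ((t - a) powr (1 - \<alpha>) - (t - b) powr (1 - \<alpha>)) / (1 - \<alpha>)) {a..b}"
proof -
  define F where "F s = - ((t - s) powr (1 - \<alpha>)) / (1 - \<alpha>)" for s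
  have c: "continuous_on {a..b} F"
    unfolding F_def using assms
    by (intro continuous_intros continuous_on_powr') auto
  have d: "(F has_vector_derivative (t - x) powr (- \<alpha>)) (at x)" if "x \<in> {a<..<b}" for x
  proof -
    have pos: "0 < t - x" using that assms by auto
    have "((\<lambda>s. (t - s) powr (1 - \<alpha>)) has_real_derivative
            ((1 - \<alpha>) * (t - x) powr (1 - \<alpha> - 1)) * (-1)) (at x)"
      by (rule DERIV_chain2[where f = "\<lambda>u. u powr (1 - \<alpha>)"])
         (use pos has_real_derivative_powr in \<open>auto intro!: derivative_eq_intros\<close>)
    then have "(F has_real_derivative (t - x) powr (- \<alpha>)) (at x)"
      unfolding F_def using assms pos by (auto intro!: derivative_eq_intros)
    then show ?thesis by (simp add: has_real_derivative_iff_has_vector_derivative)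
  qed
  have "((\<lambda>s. (t - s) powr (- \<alpha>)) has_integral (F b - F a)) {a..b}"
    by (rule fundamental_theorem_of_calculus_interior[OF assms(1) c d])
  moreover have "F b - F a = ((t - a) powr (1 - \<alpha>) - (t - b) powr (1 - \<alpha>)) / (1 - \<alpha>)"
    unfolding F_def by (simp add: diff_divide_distrib)
  ultimately show ?thesis by simp
qed

lemma spow_has_integral:
  fixes a b \<alpha> :: real
  assumes "0 \<le> a" "a \<le> b" "0 < \<alpha>"
  shows "((\<lambda>s. s powr (\<alpha> - 1)) has_integral (b powr \<alpha> - a powr \<alpha>) / \<alpha>) {a..b}"
proof -
  define F where "F s = s powr \<alpha> / \<alpha>" for s
  have c: "continuous_on {a..b} F"
    unfolding F_def using assms
    by (intro continuous_intros continuous_on_powr') auto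
  have d: "(F has_vector_derivative x powr (\<alpha> - 1)) (at x)" if "x \<in> {a<..<b}" for x
  proof -
    have pos: "0 < x" using that assms by auto
    have "(F has_real_derivative x powr (\<alpha> - 1)) (at x)"
      unfolding F_def using assms pos has_real_derivative_powr[OF pos, of \<alpha>]
      by (auto intro!: derivative_eq_intros)
    then show ?thesis by (simp add: has_real_derivative_iff_has_vector_derivative)
  qed
  have "((\<lambda>s. s powr (\<alpha> - 1)) has_integral (F b - F a)) {a..b}"
    by (rule fundamental_theorem_of_calculus_interior[OF assms(2) c d])
  then show ?thesis unfolding F_def by (simp add: diff_divide_distrib)
qed

context mesh begin

lemma bc_alt:
  assumes "\<alpha> < 1"
  shows "bc \<alpha> l j = ((tm l - tm j) powr (1 - \<alpha>) - (tm l - tm (Suc j)) powr (1 - \<alpha>)) / (1 - \<alpha>) / ta j / Gamma (1 - \<alpha>)"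
  unfolding bc_def Gamma_2_minus[OF assms] by (simp add: field_simps)

lemma bc_lower:
  assumes "0 < \<alpha>" "\<alpha> < 1" "j < l"
  shows "(tm l - tm j) powr (- \<alpha>) / Gamma (1 - \<alpha>) \<le> bc \<alpha> l j"
proof -
  have a: "0 < tm l - tm j" using tm_less assms by simp
  have b: "0 \<le> tm l - tm (Suc j)" "tm l - tm (Suc j) \<le> tm l - tm j" using tm_mono assms by auto
  have "(1 - \<alpha>) * (tm l - tm j) powr (1 - \<alpha> - 1) * ((tm l - tm j) - (tm l - tm (Suc j)))
      \<le> (tm l - tm j) powr (1 - \<alpha>) - (tm l - tm (Suc j)) powr (1 - \<alpha>)"
    by (rule conc_lower) (use assms a b in auto)
  then have "(1 - \<alpha>) * (tm l - tm j) powr (- \<alpha>) * ta j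
      \<le> (tm l - tm j) powr (1 - \<alpha>) - (tm l - tm (Suc j)) powr (1 - \<alpha>)"
    unfolding tau_def by simp
  then have "(tm l - tm j) powr (- \<alpha>) \<le> ((tm l - tm j) powr (1 - \<alpha>) - (tm l - tm (Suc j)) powr (1 - \<alpha>)) / (1 - \<alpha>) / ta j"
    using ta_pos[of j] assms by (simp add: field_simps)
  moreover have G: "0 < Gamma (1 - \<alpha>)" using assms by simp
  ultimately show ?thesis unfolding bc_alt[OF assms(2)]
    by (metis divide_right_mono less_eq_real_def)
qed

lemma bc_upper:
  assumes "0 < \<alpha>" "\<alpha> < 1" "Suc j < l"
  shows "bc \<alpha> l j \<le> (tm l - tm (Suc j)) powr (- \<alpha>) / Gamma (1 - \<alpha>)"
proof -
  have b: "0 < tm l - tm (Suc j)" "tm l - tm (Suc j) \<le> tm l - tm j" using tm_less tm_mono assms by auto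
  have "(tm l - tm j) powr (1 - \<alpha>) - (tm l - tm (Suc j)) powr (1 - \<alpha>)
      \<le> (1 - \<alpha>) * (tm l - tm (Suc j)) powr (1 - \<alpha> - 1) * ((tm l - tm j) - (tm l - tm (Suc j)))"
    by (rule conc_upper) (use assms b in auto)
  then have "(tm l - tm j) powr (1 - \<alpha>) - (tm l - tm (Suc j)) powr (1 - \<alpha>)
      \<le> (1 - \<alpha>) * (tm l - tm (Suc j)) powr (- \<alpha>) * ta j"
    unfolding tau_def by simp
  then have "((tm l - tm j) powr (1 - \<alpha>) - (tm l - tm (Suc j)) powr (1 - \<alpha>)) / (1 - \<alpha>) / ta j \<le> (tm l - tm (Suc j)) powr (- \<alpha>)"
    using ta_pos[of j] assms by (simp add: field_simps)
  moreover have G: "0 < Gamma (1 - \<alpha>)" using assms by simp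
  ultimately show ?thesis unfolding bc_alt[OF assms(2)]
    by (metis divide_right_mono less_eq_real_def)
qed

lemma bc_mono:
  assumes "0 < \<alpha>" "\<alpha> < 1" "Suc j < l"
  shows "bc \<alpha> l j \<le> bc \<alpha> l (Suc j)"
  using bc_upper[OF assms] bc_lower[OF assms(1,2), of "Suc j" l] assms by simp

lemma bc_pos:
  assumes "0 < \<alpha>" "\<alpha> < 1" "j < l"
  shows "0 < bc \<alpha> l j"
proof -
  have "0 < tm l - tm j" using tm_less assms by simp
  then have "0 < (tm l - tm j) powr (- \<alpha>) / Gamma (1 - \<alpha>)"
    using Gamma_real_pos[of "1 - \<alpha>"] assms by simp
  then show ?thesis using bc_lower[OF assms] by linarith
qed

lemma bc0_lower:
  assumes "0 < \<alpha>" "\<alpha> < 1" "1 \<le> l" "l \<le> n"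
  shows "T powr (- \<alpha>) / Gamma (1 - \<alpha>) \<le> bc \<alpha> l 0"
proof -
  have "T powr (- \<alpha>) \<le> tm l powr (- \<alpha>)"
    using powr_mono2'[of "- \<alpha>" "tm l" T] tm_pos[of l] tm_le_T[of l] assms by simp
  then have "T powr (- \<alpha>) / Gamma (1 - \<alpha>) \<le> tm l powr (- \<alpha>) / Gamma (1 - \<alpha>)"
    using Gamma_real_pos[of "1 - \<alpha>"] assms by (simp add: divide_right_mono)
  then show ?thesis using bc_lower[OF assms(1,2), of 0 l] assms by simp
qed

lemma bc_integral:
  assumes "0 < \<alpha>" "\<alpha> < 1" "j < l"
  shows "((\<lambda>s. (tm l - s) powr (- \<alpha>)) has_integral (bc \<alpha> l j * ta j * Gamma (1 - \<alpha>))) {tm j..tm (Suc j)}"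
proof -
  have "((\<lambda>s. (tm l - s) powr (- \<alpha>)) has_integral
           ((tm l - tm j) powr (1 - \<alpha>) - (tm l - tm (Suc j)) powr (1 - \<alpha>)) / (1 - \<alpha>)) {tm j..tm (Suc j)}"
    by (rule kernel_has_integral) (use assms tm_mono in auto)
  moreover have "bc \<alpha> l j * ta j * Gamma (1 - \<alpha>) = ((tm l - tm j) powr (1 - \<alpha>) - (tm l - tm (Suc j)) powr (1 - \<alpha>)) / (1 - \<alpha>)"
  proof -
    have G: "0 < Gamma (1 - \<alpha>)" using assms by simp
    then show ?thesis unfolding bc_alt[OF assms(2)] using ta_pos[of j] by simp
  qed
  ultimately show ?thesis by simp
qed

end

lemma sbp:
  fixes b e :: "nat \<Rightarrow> real"
  assumes "1 \<le> m"
  shows "(\<Sum>j<m. b j * (e (Suc j) - e j))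
         = b (m - 1) * e m - (\<Sum>j\<in>{1..<m}. (b j - b (j - 1)) * e j) - b 0 * e 0"
  using assms
proof (induction m)
  case 0 then show ?case by simp
next
  case (Suc m)
  show ?case
  proof (cases "m = 0")
    case True then show ?thesis by (simp add: algebra_simps)
  next
    case False
    then have IH: "(\<Sum>j<m. b j * (e (Suc j) - e j))
         = b (m - 1) * e m - (\<Sum>j\<in>{1..<m}. (b j - b (j - 1)) * e j) - b 0 * e 0"
      using Suc by simp
    have "{1..<Suc m} = insert m {1..<m}" using False by auto
    then have "(\<Sum>j\<in>{1..<Suc m}. (b j - b (j - 1)) * e j) = (b m - b (m - 1)) * e m + (\<Sum>j\<in>{1..<m}. (b j - b (j - 1)) * e j)"
      by simp
    then show ?thesis using IH by (simp add: algebra_simps)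
  qed
qed

lemma tele1:
  fixes f :: "nat \<Rightarrow> real"
  assumes "1 \<le> m"
  shows "(\<Sum>j\<in>{1..<m}. f j - f (j - 1)) = f (m - 1) - f 0"
  using assms
proof (induction m)
  case 0 then show ?case by simp
next
  case (Suc m)
  show ?case
  proof (cases "m = 0")
    case True then show ?thesis by simp
  next
    case False
    have "{1..<Suc m} = insert m {1..<m}" using False by auto
    then show ?thesis using Suc False by simp
  qed
qed

lemma discrete_comparison:
  fixes b :: "nat \<Rightarrow> nat \<Rightarrow> real" and E P :: "nat \<Rightarrow> real" and W :: real
  assumes mono: "\<And>l j. 1 \<le> l \<Longrightarrow> l \<le> n \<Longrightarrow> Suc j < l \<Longrightarrow> b l j \<le> b l (Suc j)"
    and pos: "\<And>l. 1 \<le> l \<Longrightarrow> l \<le> n \<Longrightarrow> 0 < b l (l - 1)"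
    and ineq: "\<And>l. 1 \<le> l \<Longrightarrow> l \<le> n \<Longrightarrow>
        b l (l - 1) * E l \<le> (\<Sum>j\<in>{1..<l}. (b l j - b l (j - 1)) * E j) + P l"
    and Pb: "\<And>l. 1 \<le> l \<Longrightarrow> l \<le> n \<Longrightarrow> P l \<le> b l 0 * W"
  shows "1 \<le> l \<Longrightarrow> l \<le> n \<Longrightarrow> E l \<le> W"
proof (induction l rule: less_induct)
  case (less l)
  have "(\<Sum>j\<in>{1..<l}. (b l j - b l (j - 1)) * E j) \<le> (\<Sum>j\<in>{1..<l}. (b l j - b l (j - 1)) * W)"
  proof (rule sum_mono)
    fix j assume j: "j \<in> {1..<l}"
    have "b l (j - 1) \<le> b l j" using mono[of l "j - 1"] j less.prems by auto
    moreover have "E j \<le> W" using less.IH[of j] j less.prems by auto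
    ultimately show "(b l j - b l (j - 1)) * E j \<le> (b l j - b l (j - 1)) * W"
      by (simp add: mult_left_mono)
  qed
  also have "\<dots> = (b l (l - 1) - b l 0) * W"
    using tele1[of l "\<lambda>j. b l j"] less.prems by (simp add: sum_distrib_right[symmetric])
  finally have "b l (l - 1) * E l \<le> (b l (l - 1) - b l 0) * W + b l 0 * W"
    using ineq[of l] Pb[of l] less.prems by linarith
  then have "b l (l - 1) * E l \<le> b l (l - 1) * W" by (simp add: algebra_simps)
  then show ?case using pos[of l] less.prems by simp
qed

lemma sum_shift_id:
  fixes e :: "nat \<Rightarrow> real"
  assumes "1 \<le> m"
  shows "(\<Sum>i\<in>{1..<m}. e i * (e (Suc i) - e (i - 1))) = e (m - 1) * e m - e 0 * e 1"
  using assms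
proof (induction m)
  case 0 then show ?case by simp
next
  case (Suc m)
  show ?case
  proof (cases "m = 0")
    case True then show ?thesis by simp
  next
    case False
    have "{1..<Suc m} = insert m {1..<m}" using False by auto
    then show ?thesis using Suc False by (simp add: algebra_simps)
  qed
qed

lemma sum_lap_id:
  fixes e :: "nat \<Rightarrow> real"
  assumes "1 \<le> m"
  shows "(\<Sum>i\<in>{1..<m}. e i * (2 * e i - e (Suc i) - e (i - 1)))
     = (\<Sum>i<m. (e (Suc i) - e i)^2) - (e m)^2 - (e 0)^2 + e (m - 1) * e m + e 0 * e 1"
  using assms
proof (induction m)
  case 0 then show ?case by simp
next
  case (Suc m)
  show ?case
  proof (cases "m = 0")
    case True then show ?thesis by (simp add: power2_eq_square algebra_simps)
  next
    case False
    have "{1..<Suc m} = insert m {1..<m}" using False by auto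
    then show ?thesis using Suc False by (simp add: power2_eq_square algebra_simps)
  qed
qed

lemma accretive:
  fixes e :: "nat \<Rightarrow> real" and v D h :: real
  assumes "1 \<le> K" "e 0 = 0" "e K = 0" "0 < h" "0 \<le> D"
  shows "0 \<le> (\<Sum>i\<in>{1..<K}. e i * (v * (e (i + 1) - e (i - 1)) / (2 * h)
                       - D * (e (i + 1) - 2 * e i + e (i - 1)) / h^2))"
proof -
  have s: "(\<Sum>i\<in>{1..<K}. e i * (v * (e (i + 1) - e (i - 1)) / (2 * h)
                       - D * (e (i + 1) - 2 * e i + e (i - 1)) / h^2))
     = v / (2 * h) * (\<Sum>i\<in>{1..<K}. e i * (e (Suc i) - e (i - 1)))
       + D / h^2 * (\<Sum>i\<in>{1..<K}. e i * (2 * e i - e (Suc i) - e (i - 1)))"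
    by (simp add: sum_distrib_left sum.distrib[symmetric] algebra_simps diff_divide_distrib add_divide_distrib)
  have "(\<Sum>i\<in>{1..<K}. e i * (e (Suc i) - e (i - 1))) = 0"
    using sum_shift_id[OF assms(1), of e] assms by simp
  moreover have "0 \<le> (\<Sum>i\<in>{1..<K}. e i * (2 * e i - e (Suc i) - e (i - 1)))"
    using sum_lap_id[OF assms(1), of e] assms by (simp add: sum_nonneg)
  ultimately show ?thesis unfolding s using assms by simp
qed

lemma spatial_sign:
  fixes v D h ep em e0 :: real
  assumes "0 < h" "0 < D" "0 < v" "v * h \<le> 2 * D" "ep \<le> e0" "em \<le> e0"
  shows "- v * (ep - em) / (2 * h) + D * (ep - 2 * e0 + em) / h^2 \<le> 0"
proof -
  have a: "(2 * D - v * h) * ep \<le> (2 * D - v * h) * e0" using assms by (intro mult_left_mono) auto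
  have b: "(2 * D + v * h) * em \<le> (2 * D + v * h) * e0" using assms by (intro mult_left_mono) auto
  have "- v * (ep - em) / (2 * h) + D * (ep - 2 * e0 + em) / h^2
      = ((2 * D - v * h) * ep + (2 * D + v * h) * em - 4 * D * e0) / (2 * h^2)"
    using assms by (simp add: field_simps power2_eq_square)
  also have "\<dots> \<le> 0" using a b assms by (intro divide_nonpos_pos) (auto simp: algebra_simps)
  finally show ?thesis .
qed

lemma max_stab:
  fixes e \<rho> b :: "nat \<Rightarrow> nat \<Rightarrow> real" and v D h :: real and K l :: nat
  assumes K: "2 \<le> K" and h: "0 < h" "0 < D" "0 < v" "v * h \<le> 2 * D"
    and l: "1 \<le> l"
    and mono: "\<And>j. Suc j < l \<Longrightarrow> b l j \<le> b l (Suc j)"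
    and e0: "\<And>i. i \<le> K \<Longrightarrow> e i 0 = 0"
    and bd: "e 0 l = 0" "e K l = 0"
    and eq: "\<And>i. i \<in> {1..K-1} \<Longrightarrow> (\<Sum>j<l. b l j * (e i (Suc j) - e i j))
        = - v * (e (i+1) l - e (i-1) l) / (2*h) + D * (e (i+1) l - 2 * e i l + e (i-1) l) / h^2 + \<rho> i l"
  shows "b l (l - 1) * Max ((\<lambda>i. \<bar>e i l\<bar>) ` {1..K-1})
     \<le> (\<Sum>j\<in>{1..<l}. (b l j - b l (j - 1)) * Max ((\<lambda>i. \<bar>e i j\<bar>) ` {1..K-1}))
       + Max ((\<lambda>i. \<bar>\<rho> i l\<bar>) ` {1..K-1})"
proof -
  define E where "E j = Max ((\<lambda>i. \<bar>e i j\<bar>) ` {1..K-1})" for j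
  have ne: "{1..K-1} \<noteq> {}" using K by auto
  have Ege: "\<bar>e i j\<bar> \<le> E j" if "i \<in> {1..K-1}" for i j
    unfolding E_def using that by (intro Max_ge) auto
  have "E l \<in> (\<lambda>i. \<bar>e i l\<bar>) ` {1..K-1}"
    unfolding E_def using ne by (intro Max_in) auto
  then obtain i0 where i0: "i0 \<in> {1..K-1}" "\<bar>e i0 l\<bar> = E l" by force
  have Rge: "\<bar>\<rho> i0 l\<bar> \<le> Max ((\<lambda>i. \<bar>\<rho> i l\<bar>) ` {1..K-1})"
    using i0 by (intro Max_ge) auto
  obtain \<sigma> :: real where sg: "\<sigma> = 1 \<or> \<sigma> = -1" "\<sigma> * e i0 l = E l"
  proof (cases "e i0 l \<ge> 0")
    case True then show ?thesis using that[of 1] i0 by auto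
  next
    case False then show ?thesis using that[of "-1"] i0 by auto
  qed
  have nb: "\<sigma> * e i l \<le> E l" if "i \<le> K" for i
  proof (cases "i = 0 \<or> i = K")
    case True
    then have "e i l = 0" using bd by auto
    then show ?thesis using Ege[of i0 l] i0 by auto
  next
    case False
    then have "i \<in> {1..K-1}" using that by auto
    then show ?thesis using Ege[of i l] sg(1) by auto
  qed
  have sp: "\<sigma> * (- v * (e (i0+1) l - e (i0-1) l) / (2*h) + D * (e (i0+1) l - 2 * e i0 l + e (i0-1) l) / h^2) \<le> 0"
  proof -
    have "- v * (\<sigma> * e (i0+1) l - \<sigma> * e (i0-1) l) / (2*h) + D * (\<sigma> * e (i0+1) l - 2 * (\<sigma> * e i0 l) + \<sigma> * e (i0-1) l) / h^2 \<le> 0"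
      using spatial_sign[OF h, of "\<sigma> * e (i0+1) l" "\<sigma> * e i0 l" "\<sigma> * e (i0-1) l"] nb[of "i0+1"] nb[of "i0-1"] sg(2) i0
      by auto
    then show ?thesis by (simp add: algebra_simps add_divide_distrib diff_divide_distrib)
  qed
  have lhs: "\<sigma> * (\<Sum>j<l. b l j * (e i0 (Suc j) - e i0 j))
      = b l (l - 1) * E l - (\<Sum>j\<in>{1..<l}. (b l j - b l (j - 1)) * (\<sigma> * e i0 j))"
  proof -
    have A: "(\<Sum>j<l. b l j * (e i0 (Suc j) - e i0 j)) = b l (l - 1) * e i0 l - (\<Sum>j\<in>{1..<l}. (b l j - b l (j - 1)) * e i0 j)"
    proof -
      have "e i0 0 = 0" using e0[of i0] i0 by auto
      then show ?thesis using sbp[OF l, of "b l" "e i0"] by simp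
    qed
    have B: "\<sigma> * (\<Sum>j\<in>{1..<l}. (b l j - b l (j - 1)) * e i0 j) = (\<Sum>j\<in>{1..<l}. (b l j - b l (j - 1)) * (\<sigma> * e i0 j))"
      by (simp add: sum_distrib_left mult.left_commute)
    have "\<sigma> * (\<Sum>j<l. b l j * (e i0 (Suc j) - e i0 j)) = b l (l - 1) * (\<sigma> * e i0 l) - \<sigma> * (\<Sum>j\<in>{1..<l}. (b l j - b l (j - 1)) * e i0 j)"
      by (subst A) (simp add: algebra_simps)
    then show ?thesis by (simp only: B sg(2))
  qed
  have "(\<Sum>j\<in>{1..<l}. (b l j - b l (j - 1)) * (\<sigma> * e i0 j)) \<le> (\<Sum>j\<in>{1..<l}. (b l j - b l (j - 1)) * E j)"
  proof (rule sum_mono)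
    fix j assume j: "j \<in> {1..<l}"
    have "b l (j - 1) \<le> b l j" using mono[of "j - 1"] j by auto
    moreover have "\<sigma> * e i0 j \<le> E j" using Ege[OF i0(1), of j] sg(1) by auto
    ultimately show "(b l j - b l (j - 1)) * (\<sigma> * e i0 j) \<le> (b l j - b l (j - 1)) * E j"
      by (simp add: mult_left_mono)
  qed
  moreover have "\<sigma> * (\<Sum>j<l. b l j * (e i0 (Suc j) - e i0 j)) \<le> \<bar>\<rho> i0 l\<bar>"
  proof -
    have "\<sigma> * (\<Sum>j<l. b l j * (e i0 (Suc j) - e i0 j))
        = \<sigma> * (- v * (e (i0+1) l - e (i0-1) l) / (2*h) + D * (e (i0+1) l - 2 * e i0 l + e (i0-1) l) / h^2) + \<sigma> * \<rho> i0 l"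
      using eq[OF i0(1)] by (simp add: algebra_simps)
    moreover have "\<sigma> * \<rho> i0 l \<le> \<bar>\<rho> i0 l\<bar>" using sg(1) by auto
    ultimately show ?thesis using sp by linarith
  qed
  ultimately show ?thesis using lhs Rge unfolding E_def by linarith
qed

lemma eucl_stab:
  fixes e \<rho> b :: "nat \<Rightarrow> nat \<Rightarrow> real" and v D h :: real and K l :: nat
  assumes K: "2 \<le> K" and h: "0 < h" "0 < D"
    and l: "1 \<le> l"
    and mono: "\<And>j. Suc j < l \<Longrightarrow> b l j \<le> b l (Suc j)"
    and e0: "\<And>i. i \<le> K \<Longrightarrow> e i 0 = 0"
    and bd: "e 0 l = 0" "e K l = 0"
    and eq: "\<And>i. i \<in> {1..K-1} \<Longrightarrow> (\<Sum>j<l. b l j * (e i (Suc j) - e i j))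
        = - v * (e (i+1) l - e (i-1) l) / (2*h) + D * (e (i+1) l - 2 * e i l + e (i-1) l) / h^2 + \<rho> i l"
  shows "b l (l - 1) * L2_set (\<lambda>i. e i l) {1..K-1}
     \<le> (\<Sum>j\<in>{1..<l}. (b l j - b l (j - 1)) * L2_set (\<lambda>i. e i j) {1..K-1})
       + L2_set (\<lambda>i. \<rho> i l) {1..K-1}"
proof -
  define S where "S = {1..K-1}"
  define N where "N j = L2_set (\<lambda>i. e i j) S" for j
  define R where "R = L2_set (\<lambda>i. \<rho> i l) S"
  define c where "c j = b l j - b l (j - 1)" for j
  have S2: "S = {1..<K}" unfolding S_def using K by auto
  have fin: "finite S" unfolding S_def by simp
  have c0: "0 \<le> c j" if "j \<in> {1..<l}" for j
    unfolding c_def using mono[of "j - 1"] that by auto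
  have N0: "0 \<le> N j" for j unfolding N_def by (rule L2_set_nonneg)
  have R0: "0 \<le> R" unfolding R_def by (rule L2_set_nonneg)
  have NN: "(\<Sum>i\<in>S. e i l * e i l) = N l * N l"
    unfolding N_def L2_set_def by (simp add: power2_eq_square[symmetric] sum_nonneg)
  have per_i: "e i l * (\<Sum>j<l. b l j * (e i (Suc j) - e i j))
      = b l (l - 1) * (e i l * e i l) - (\<Sum>j\<in>{1..<l}. c j * (e i l * e i j))" if "i \<in> S" for i
  proof -
    have "e i 0 = 0" using e0[of i] that unfolding S_def by auto
    then have H: "(\<Sum>j<l. b l j * (e i (Suc j) - e i j)) = b l (l - 1) * e i l - (\<Sum>j\<in>{1..<l}. c j * e i j)"
      using sbp[OF l, of "b l" "e i"] unfolding c_def by simp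
    have "e i l * (\<Sum>j<l. b l j * (e i (Suc j) - e i j)) = b l (l - 1) * (e i l * e i l) - e i l * (\<Sum>j\<in>{1..<l}. c j * e i j)"
      by (subst H) (simp add: algebra_simps)
    moreover have "e i l * (\<Sum>j\<in>{1..<l}. c j * e i j) = (\<Sum>j\<in>{1..<l}. c j * (e i l * e i j))"
      by (simp add: sum_distrib_left mult.left_commute)
    ultimately show ?thesis by simp
  qed
  have "(\<Sum>i\<in>S. e i l * (\<Sum>j<l. b l j * (e i (Suc j) - e i j)))
      = (\<Sum>i\<in>S. b l (l - 1) * (e i l * e i l) - (\<Sum>j\<in>{1..<l}. c j * (e i l * e i j)))"
    by (rule sum.cong) (use per_i in auto)
  also have "\<dots> = b l (l - 1) * (\<Sum>i\<in>S. e i l * e i l) - (\<Sum>i\<in>S. \<Sum>j\<in>{1..<l}. c j * (e i l * e i j))"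
    by (simp only: sum_subtractf sum_distrib_left)
  also have "(\<Sum>i\<in>S. \<Sum>j\<in>{1..<l}. c j * (e i l * e i j)) = (\<Sum>j\<in>{1..<l}. \<Sum>i\<in>S. c j * (e i l * e i j))"
    by (rule sum.swap)
  also have "\<dots> = (\<Sum>j\<in>{1..<l}. c j * (\<Sum>i\<in>S. e i l * e i j))"
    by (simp only: sum_distrib_left)
  finally have "(\<Sum>i\<in>S. e i l * (\<Sum>j<l. b l j * (e i (Suc j) - e i j)))
      = b l (l - 1) * (N l * N l) - (\<Sum>j\<in>{1..<l}. c j * (\<Sum>i\<in>S. e i l * e i j))"
    by (simp only: NN)
  moreover have "(\<Sum>j\<in>{1..<l}. c j * (N l * N j)) \<ge> (\<Sum>j\<in>{1..<l}. c j * (\<Sum>i\<in>S. e i l * e i j))"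
  proof (rule sum_mono)
    fix j assume j: "j \<in> {1..<l}"
    have "(\<Sum>i\<in>S. e i l * e i j) \<le> (\<Sum>i\<in>S. \<bar>e i l\<bar> * \<bar>e i j\<bar>)"
      by (rule sum_mono) (simp add: abs_mult[symmetric])
    also have "\<dots> \<le> N l * N j" unfolding N_def by (rule L2_set_mult_ineq)
    finally show "c j * (\<Sum>i\<in>S. e i l * e i j) \<le> c j * (N l * N j)"
      using c0[OF j] by (simp add: mult_left_mono)
  qed
  moreover have "(\<Sum>i\<in>S. e i l * (\<Sum>j<l. b l j * (e i (Suc j) - e i j))) \<le> N l * R"
  proof -
    have "(\<Sum>i\<in>S. e i l * (\<Sum>j<l. b l j * (e i (Suc j) - e i j)))
        = - (\<Sum>i\<in>S. e i l * (v * (e (i + 1) l - e (i - 1) l) / (2 * h)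
                       - D * (e (i + 1) l - 2 * e i l + e (i - 1) l) / h^2))
          + (\<Sum>i\<in>S. e i l * \<rho> i l)"
    proof -
      have "(\<Sum>i\<in>S. e i l * (\<Sum>j<l. b l j * (e i (Suc j) - e i j)))
          = (\<Sum>i\<in>S. - (e i l * (v * (e (i + 1) l - e (i - 1) l) / (2 * h)
                       - D * (e (i + 1) l - 2 * e i l + e (i - 1) l) / h^2)) + e i l * \<rho> i l)"
      proof (rule sum.cong)
        fix i assume "i \<in> S"
        then have H: "(\<Sum>j<l. b l j * (e i (Suc j) - e i j)) = - v * (e (i+1) l - e (i-1) l) / (2*h) + D * (e (i+1) l - 2 * e i l + e (i-1) l) / h^2 + \<rho> i l"
          using eq unfolding S_def by blast
        then show "e i l * (\<Sum>j<l. b l j * (e i (Suc j) - e i j)) = - (e i l * (v * (e (i + 1) l - e (i - 1) l) / (2 * h)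
                       - D * (e (i + 1) l - 2 * e i l + e (i - 1) l) / h^2)) + e i l * \<rho> i l"
          using h by (subst H) (simp add: field_simps)
      qed simp
      then show ?thesis by (simp only: sum.distrib sum_negf)
    qed
    moreover have "0 \<le> (\<Sum>i\<in>S. e i l * (v * (e (i + 1) l - e (i - 1) l) / (2 * h)
                       - D * (e (i + 1) l - 2 * e i l + e (i - 1) l) / h^2))"
      unfolding S2 using accretive[of K "\<lambda>i. e i l" h D v] K bd h by simp
    moreover have "(\<Sum>i\<in>S. e i l * \<rho> i l) \<le> N l * R"
    proof -
      have "(\<Sum>i\<in>S. e i l * \<rho> i l) \<le> (\<Sum>i\<in>S. \<bar>e i l\<bar> * \<bar>\<rho> i l\<bar>)"
        by (rule sum_mono) (simp add: abs_mult[symmetric])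
      also have "\<dots> \<le> N l * R" unfolding N_def R_def by (rule L2_set_mult_ineq)
      finally show ?thesis .
    qed
    ultimately show ?thesis by linarith
  qed
  ultimately have key: "N l * (b l (l - 1) * N l) \<le> N l * ((\<Sum>j\<in>{1..<l}. c j * N j) + R)"
    by (simp add: algebra_simps sum_distrib_left)
  show ?thesis
  proof (cases "N l = 0")
    case True
    have "0 \<le> (\<Sum>j\<in>{1..<l}. c j * N j)" using c0 N0 by (intro sum_nonneg) simp
    then show ?thesis using True R0 unfolding N_def R_def c_def S_def by simp
  next
    case False
    then have "0 < N l" using N0[of l] by simp
    then have "b l (l - 1) * N l \<le> (\<Sum>j\<in>{1..<l}. c j * N j) + R"
      using key by simp
    then show ?thesis unfolding N_def R_def c_def S_def by simp
  qed
qed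

lemma lip0:
  fixes \<phi> \<phi>' :: "real \<Rightarrow> real"
  assumes "0 \<le> s"
    and d: "\<And>u. u \<in> {0..s} \<Longrightarrow> (\<phi> has_real_derivative \<phi>' u) (at u within {0..s})"
    and b: "\<And>u. u \<in> {0..s} \<Longrightarrow> \<bar>\<phi>' u\<bar> \<le> B"
  shows "\<bar>\<phi> s - \<phi> 0\<bar> \<le> B * s"
proof -
  have "norm (\<phi> s - \<phi> 0) \<le> B * norm (s - 0)"
    by (rule field_differentiable_bound[of "{0..s}" \<phi> \<phi>' B]) (use assms in auto)
  then show ?thesis using assms by simp
qed

lemma step_bound:
  fixes \<phi> \<phi>' :: "real \<Rightarrow> real"
  assumes "0 \<le> s" "0 \<le> B" "\<phi> 0 = 0"
    and d: "\<And>u. u \<in> {0..s} \<Longrightarrow> (\<phi> has_real_derivative \<phi>' u) (at u within {0..s})"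
    and b: "\<And>u. u \<in> {0..s} \<Longrightarrow> \<bar>\<phi>' u\<bar> \<le> B * u ^ k"
    and u: "u \<in> {0..s}"
  shows "\<bar>\<phi> u\<bar> \<le> B * u ^ Suc k"
proof -
  have "\<bar>\<phi> u - \<phi> 0\<bar> \<le> (B * u ^ k) * u"
  proof (rule lip0)
    show "0 \<le> u" using u by simp
    fix w assume w: "w \<in> {0..u}"
    then have ws: "w \<in> {0..s}" using u by auto
    show "(\<phi> has_real_derivative \<phi>' w) (at w within {0..u})"
      using d[OF ws] by (rule DERIV_subset) (use u in auto)
    have "w ^ k \<le> u ^ k" using w by (intro power_mono) auto
    then show "\<bar>\<phi>' w\<bar> \<le> B * u ^ k" using b[OF ws] assms(2) by (meson mult_left_mono order_trans)
  qed
  then show ?thesis using assms by (simp add: algebra_simps)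
qed

lemma shift_derivs:
  fixes F F' :: "real \<Rightarrow> real"
  assumes d: "\<And>z. z \<in> {0..L} \<Longrightarrow> (F has_real_derivative F' z) (at z within {0..L})"
    and xs: "0 \<le> x - s" "x + s \<le> L" "0 \<le> s"
    and u: "u \<in> {0..s}"
  shows "((\<lambda>u. F (x + u)) has_real_derivative F' (x + u)) (at u within {0..s})"
    and "((\<lambda>u. F (x - u)) has_real_derivative - F' (x - u)) (at u within {0..s})"
proof -
  have i1: "(\<lambda>u. x + u) ` {0..s} \<subseteq> {0..L}" using xs by auto
  have i2: "(\<lambda>u. x - u) ` {0..s} \<subseteq> {0..L}" using xs by auto
  have "x + u \<in> {0..L}" "x - u \<in> {0..L}" using u xs by auto
  have "(F has_real_derivative F' (x + u)) (at (x + u) within (\<lambda>u. x + u) ` {0..s})"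
    using d[OF \<open>x + u \<in> {0..L}\<close>] i1 by (rule DERIV_subset)
  moreover have "((\<lambda>u. x + u) has_real_derivative 1) (at u within {0..s})"
    by (auto intro!: derivative_eq_intros)
  ultimately have "(F \<circ> (\<lambda>u. x + u) has_real_derivative F' (x + u) * 1) (at u within {0..s})"
    by (rule DERIV_image_chain)
  then show "((\<lambda>u. F (x + u)) has_real_derivative F' (x + u)) (at u within {0..s})"
    by (simp add: o_def)
  have "(F has_real_derivative F' (x - u)) (at (x - u) within (\<lambda>u. x - u) ` {0..s})"
    using d[OF \<open>x - u \<in> {0..L}\<close>] i2 by (rule DERIV_subset)
  moreover have "((\<lambda>u. x - u) has_real_derivative -1) (at u within {0..s})"
    by (auto intro!: derivative_eq_intros)
  ultimately have "(F \<circ> (\<lambda>u. x - u) has_real_derivative F' (x - u) * -1) (at u within {0..s})"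
    by (rule DERIV_image_chain)
  then show "((\<lambda>u. F (x - u)) has_real_derivative - F' (x - u)) (at u within {0..s})"
    by (simp add: o_def)
qed

lemma central1:
  fixes y0 y1 y2 y3 :: "real \<Rightarrow> real"
  assumes d1: "\<And>z. z \<in> {0..L} \<Longrightarrow> (y0 has_real_derivative y1 z) (at z within {0..L})"
    and d2: "\<And>z. z \<in> {0..L} \<Longrightarrow> (y1 has_real_derivative y2 z) (at z within {0..L})"
    and d3: "\<And>z. z \<in> {0..L} \<Longrightarrow> (y2 has_real_derivative y3 z) (at z within {0..L})"
    and M: "\<And>z. z \<in> {0..L} \<Longrightarrow> \<bar>y3 z\<bar> \<le> M"
    and xs: "0 \<le> x - s" "x + s \<le> L" "0 < s"
  shows "\<bar>(y0 (x + s) - y0 (x - s)) / (2 * s) - y1 x\<bar> \<le> M * s^2"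
proof -
  have s0: "0 \<le> s" using xs by simp
  have M0: "0 \<le> M" using M[of x] xs by auto
  have in1: "x + u \<in> {0..L}" "x - u \<in> {0..L}" if "u \<in> {0..s}" for u using that xs by auto
  define g2 where "g2 u = y2 (x + u) - y2 (x - u)" for u
  define g1 where "g1 u = y1 (x + u) + y1 (x - u) - 2 * y1 x" for u
  define g0 where "g0 u = y0 (x + u) - y0 (x - u) - 2 * u * y1 x" for u
  have b2: "\<bar>g2 u\<bar> \<le> (2 * M) * u ^ Suc 0" if "u \<in> {0..s}" for u
  proof (rule step_bound[where \<phi>' = "\<lambda>u. y3 (x + u) + y3 (x - u)" and s = s])
    fix w assume w: "w \<in> {0..s}"
    show "(g2 has_real_derivative y3 (x + w) + y3 (x - w)) (at w within {0..s})"
      unfolding g2_def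
      using DERIV_diff[OF shift_derivs(1)[OF d3 xs(1,2) s0 w] shift_derivs(2)[OF d3 xs(1,2) s0 w]] by simp
    show "\<bar>y3 (x + w) + y3 (x - w)\<bar> \<le> 2 * M * w ^ 0"
      using M[OF in1(1)[OF w]] M[OF in1(2)[OF w]] by simp
  qed (use that s0 M0 g2_def in auto)
  have b1: "\<bar>g1 u\<bar> \<le> (2 * M) * u ^ Suc 1" if "u \<in> {0..s}" for u
  proof (rule step_bound[where \<phi>' = g2 and s = s])
    fix w assume w: "w \<in> {0..s}"
    show "(g1 has_real_derivative g2 w) (at w within {0..s})"
      unfolding g1_def g2_def
      using DERIV_diff[OF DERIV_add[OF shift_derivs(1)[OF d2 xs(1,2) s0 w] shift_derivs(2)[OF d2 xs(1,2) s0 w]] DERIV_const[of "2 * y1 x"]]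
      by simp
    show "\<bar>g2 w\<bar> \<le> 2 * M * w ^ 1" using b2[OF w] by simp
  qed (use that s0 M0 g1_def in auto)
  have b0: "\<bar>g0 u\<bar> \<le> (2 * M) * u ^ Suc 2" if "u \<in> {0..s}" for u
  proof (rule step_bound[where \<phi>' = g1 and s = s])
    fix w assume w: "w \<in> {0..s}"
    have C: "((\<lambda>u. 2 * u * y1 x) has_real_derivative 2 * y1 x) (at w within {0..s})"
      by (auto intro!: derivative_eq_intros)
    show "(g0 has_real_derivative g1 w) (at w within {0..s})"
      unfolding g0_def g1_def
      using DERIV_diff[OF DERIV_diff[OF shift_derivs(1)[OF d1 xs(1,2) s0 w] shift_derivs(2)[OF d1 xs(1,2) s0 w]] C]
      by (simp add: algebra_simps)
    show "\<bar>g1 w\<bar> \<le> 2 * M * w ^ 2" using b1[OF w] by (simp add: power2_eq_square)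
  qed (use that s0 M0 g0_def in auto)
  have "(y0 (x + s) - y0 (x - s)) / (2 * s) - y1 x = g0 s / (2 * s)"
    unfolding g0_def using xs by (simp add: field_simps)
  then have "\<bar>(y0 (x + s) - y0 (x - s)) / (2 * s) - y1 x\<bar> = \<bar>g0 s\<bar> / (2 * s)"
    using xs by simp
  also have "\<dots> \<le> (2 * M) * s ^ 3 / (2 * s)"
    using b0[of s] s0 xs by (intro divide_right_mono) auto
  also have "\<dots> = M * s^2" using xs by (simp add: power2_eq_square power3_eq_cube)
  finally show ?thesis .
qed

lemma central2:
  fixes y0 y1 y2 y3 y4 :: "real \<Rightarrow> real"
  assumes d1: "\<And>z. z \<in> {0..L} \<Longrightarrow> (y0 has_real_derivative y1 z) (at z within {0..L})"
    and d2: "\<And>z. z \<in> {0..L} \<Longrightarrow> (y1 has_real_derivative y2 z) (at z within {0..L})"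
    and d3: "\<And>z. z \<in> {0..L} \<Longrightarrow> (y2 has_real_derivative y3 z) (at z within {0..L})"
    and d4: "\<And>z. z \<in> {0..L} \<Longrightarrow> (y3 has_real_derivative y4 z) (at z within {0..L})"
    and M: "\<And>z. z \<in> {0..L} \<Longrightarrow> \<bar>y4 z\<bar> \<le> M"
    and xs: "0 \<le> x - s" "x + s \<le> L" "0 < s"
  shows "\<bar>(y0 (x + s) - 2 * y0 x + y0 (x - s)) / s^2 - y2 x\<bar> \<le> 2 * M * s^2"
proof -
  have s0: "0 \<le> s" using xs by simp
  have M0: "0 \<le> M" using M[of x] xs by auto
  have in1: "x + u \<in> {0..L}" "x - u \<in> {0..L}" if "u \<in> {0..s}" for u using that xs by auto
  define g3 where "g3 u = y3 (x + u) - y3 (x - u)" for u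
  define g2 where "g2 u = y2 (x + u) + y2 (x - u) - 2 * y2 x" for u
  define g1 where "g1 u = y1 (x + u) - y1 (x - u) - 2 * u * y2 x" for u
  define g0 where "g0 u = y0 (x + u) + y0 (x - u) - 2 * y0 x - u^2 * y2 x" for u
  have b3: "\<bar>g3 u\<bar> \<le> (2 * M) * u ^ Suc 0" if "u \<in> {0..s}" for u
  proof (rule step_bound[where \<phi>' = "\<lambda>u. y4 (x + u) + y4 (x - u)" and s = s])
    fix w assume w: "w \<in> {0..s}"
    show "(g3 has_real_derivative y4 (x + w) + y4 (x - w)) (at w within {0..s})"
      unfolding g3_def
      using DERIV_diff[OF shift_derivs(1)[OF d4 xs(1,2) s0 w] shift_derivs(2)[OF d4 xs(1,2) s0 w]] by simp
    show "\<bar>y4 (x + w) + y4 (x - w)\<bar> \<le> 2 * M * w ^ 0"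
      using M[OF in1(1)[OF w]] M[OF in1(2)[OF w]] by simp
  qed (use that s0 M0 g3_def in auto)
  have b2: "\<bar>g2 u\<bar> \<le> (2 * M) * u ^ Suc 1" if "u \<in> {0..s}" for u
  proof (rule step_bound[where \<phi>' = g3 and s = s])
    fix w assume w: "w \<in> {0..s}"
    show "(g2 has_real_derivative g3 w) (at w within {0..s})"
      unfolding g2_def g3_def
      using DERIV_diff[OF DERIV_add[OF shift_derivs(1)[OF d3 xs(1,2) s0 w] shift_derivs(2)[OF d3 xs(1,2) s0 w]] DERIV_const[of "2 * y2 x"]]
      by simp
    show "\<bar>g3 w\<bar> \<le> 2 * M * w ^ 1" using b3[OF w] by simp
  qed (use that s0 M0 g2_def in auto)
  have b1: "\<bar>g1 u\<bar> \<le> (2 * M) * u ^ Suc 2" if "u \<in> {0..s}" for u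
  proof (rule step_bound[where \<phi>' = g2 and s = s])
    fix w assume w: "w \<in> {0..s}"
    have C: "((\<lambda>u. 2 * u * y2 x) has_real_derivative 2 * y2 x) (at w within {0..s})"
      by (auto intro!: derivative_eq_intros)
    show "(g1 has_real_derivative g2 w) (at w within {0..s})"
      unfolding g1_def g2_def
      using DERIV_diff[OF DERIV_diff[OF shift_derivs(1)[OF d2 xs(1,2) s0 w] shift_derivs(2)[OF d2 xs(1,2) s0 w]] C]
      by (simp add: algebra_simps)
    show "\<bar>g2 w\<bar> \<le> 2 * M * w ^ 2" using b2[OF w] by (simp add: power2_eq_square)
  qed (use that s0 M0 g1_def in auto)
  have b0: "\<bar>g0 u\<bar> \<le> (2 * M) * u ^ Suc 3" if "u \<in> {0..s}" for u
  proof (rule step_bound[where \<phi>' = g1 and s = s])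
    fix w assume w: "w \<in> {0..s}"
    have C: "((\<lambda>u. u^2 * y2 x) has_real_derivative 2 * w * y2 x) (at w within {0..s})"
      by (auto intro!: derivative_eq_intros)
    show "(g0 has_real_derivative g1 w) (at w within {0..s})"
      unfolding g0_def g1_def
      using DERIV_diff[OF DERIV_diff[OF DERIV_add[OF shift_derivs(1)[OF d1 xs(1,2) s0 w] shift_derivs(2)[OF d1 xs(1,2) s0 w]] DERIV_const[of "2 * y0 x"]] C]
      by (simp add: algebra_simps)
    show "\<bar>g1 w\<bar> \<le> 2 * M * w ^ 3" using b1[OF w] by simp
  qed (use that s0 M0 g0_def in auto)
  have "(y0 (x + s) - 2 * y0 x + y0 (x - s)) / s^2 - y2 x = g0 s / s^2"
    unfolding g0_def using xs by (simp add: field_simps)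
  then have "\<bar>(y0 (x + s) - 2 * y0 x + y0 (x - s)) / s^2 - y2 x\<bar> = \<bar>g0 s\<bar> / s^2"
    using xs by simp
  also have "\<dots> \<le> (2 * M) * s ^ 4 / s^2"
    using b0[of s] s0 xs by (intro divide_right_mono) auto
  also have "\<dots> = 2 * M * s^2" using xs by (simp add: power2_eq_square power4_eq_xxxx)
  finally show ?thesis .
qed

lemma lip_on:
  fixes \<phi> \<phi>' :: "real \<Rightarrow> real"
  assumes d: "\<And>u. u \<in> {a..b} \<Longrightarrow> (\<phi> has_real_derivative \<phi>' u) (at u within {a..b})"
    and bd: "\<And>u. u \<in> {a..b} \<Longrightarrow> \<bar>\<phi>' u\<bar> \<le> B"
    and xy: "x \<in> {a..b}" "y \<in> {a..b}"
  shows "\<bar>\<phi> x - \<phi> y\<bar> \<le> B * \<bar>x - y\<bar>"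
  using field_differentiable_bound[of "{a..b}" \<phi> \<phi>' B x y] assms by auto

lemma integral_split_sum:
  fixes f :: "real \<Rightarrow> real" and t :: "nat \<Rightarrow> real"
  assumes mono: "\<And>i j. i \<le> j \<Longrightarrow> t i \<le> t j" and t0: "t 0 = 0"
    and int: "f integrable_on {0..t l}"
  shows "m \<le> l \<Longrightarrow> integral {0..t m} f = (\<Sum>j<m. integral {t j..t (Suc j)} f)"
proof (induction m)
  case 0 then show ?case using t0 by simp
next
  case (Suc m)
  have i: "f integrable_on {0..t (Suc m)}"
    using integrable_subinterval_real[OF int] mono[of "Suc m" l] Suc.prems by auto
  have "integral {0..t (Suc m)} f = integral {0..t m} f + integral {t m..t (Suc m)} f"
    using Henstock_Kurzweil_Integration.integral_combine[where a = 0 and c = "t m" and b = "t (Suc m)" and f = f] i mono[of 0 m] mono[of m "Suc m"] t0 by auto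
  then show ?case using Suc by simp
qed

locale tfun = mesh +
  fixes \<alpha> C0 :: real and Y Y' Y'' :: "real \<Rightarrow> real"
  assumes a0: "0 < \<alpha>" and a1: "\<alpha> < 1" and C0: "0 < C0"
    and Yc: "continuous_on {0..T} Y"
    and dY: "\<And>s. s \<in> {0<..T} \<Longrightarrow> (Y has_real_derivative Y' s) (at s within {0..T})"
    and dY': "\<And>s. s \<in> {0<..T} \<Longrightarrow> (Y' has_real_derivative Y'' s) (at s within {0..T})"
    and b1: "\<And>s. s \<in> {0<..T} \<Longrightarrow> \<bar>Y' s\<bar> \<le> C0 * (1 + s powr (\<alpha> - 1))"
    and b2: "\<And>s. s \<in> {0<..T} \<Longrightarrow> \<bar>Y'' s\<bar> \<le> C0 * (1 + s powr (\<alpha> - 2))"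
    and Yint: "\<And>t. t \<in> {0<..T} \<Longrightarrow> (\<lambda>s. (t - s) powr (- \<alpha>) * Y' s) integrable_on {0..t}"
begin

definition "kk l s = (tm l - s) powr (- \<alpha>)"
definition "dl j = (Y (tm (Suc j)) - Y (tm j)) / ta j"
definition "II l j = integral {tm j..tm (Suc j)} (\<lambda>s. kk l s * (dl j - Y' s))"

lemma G_pos: "0 < Gamma (1 - \<alpha>)" using a1 by simp

lemma Yftc:
  assumes "j < n"
  shows "(Y' has_integral (Y (tm (Suc j)) - Y (tm j))) {tm j..tm (Suc j)}"
proof (rule fundamental_theorem_of_calculus_interior)
  show "tm j \<le> tm (Suc j)" using tm_mono by simp
  have "{tm j..tm (Suc j)} \<subseteq> {0..T}" using tm_nonneg tm_le_T[of "Suc j"] assms by auto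
  then show "continuous_on {tm j..tm (Suc j)} Y" using Yc continuous_on_subset by blast
  fix u assume u: "u \<in> {tm j<..<tm (Suc j)}"
  then have u0: "0 < u" "u < T" using tm_nonneg[of j] tm_le_T[of "Suc j"] assms by auto
  then have "(Y has_real_derivative Y' u) (at u within {0..T})" using dY by auto
  then have "(Y has_real_derivative Y' u) (at u)" using at_within_Icc_at[of 0 u T] u0 by simp
  then show "(Y has_vector_derivative Y' u) (at u)"
    by (simp add: has_real_derivative_iff_has_vector_derivative)
qed

lemma dl_eq: "dl j * ta j = Y (tm (Suc j)) - Y (tm j)"
  unfolding dl_def using ta_pos[of j] by simp

lemma kY_int:
  assumes "j < l" "l \<le> n"
  shows "(\<lambda>s. kk l s * Y' s) integrable_on {tm j..tm (Suc j)}"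
proof -
  have "0 < tm l" using tm_pos assms by simp
  moreover have "tm l \<le> T" using tm_le_T assms by simp
  ultimately have "(\<lambda>s. kk l s * Y' s) integrable_on {0..tm l}" unfolding kk_def using Yint by simp
  then show ?thesis
    by (rule integrable_subinterval_real) (use tm_nonneg tm_mono assms in auto)
qed

lemma II_alt:
  assumes "j < l" "l \<le> n"
  shows "II l j = bc \<alpha> l j * (Y (tm (Suc j)) - Y (tm j)) * Gamma (1 - \<alpha>) - integral {tm j..tm (Suc j)} (\<lambda>s. kk l s * Y' s)"
proof -
  have k: "((\<lambda>s. kk l s) has_integral (bc \<alpha> l j * ta j * Gamma (1 - \<alpha>))) {tm j..tm (Suc j)}"
    unfolding kk_def using bc_integral[OF a0 a1 assms(1)] .
  have "((\<lambda>s. kk l s * dl j) has_integral (bc \<alpha> l j * ta j * Gamma (1 - \<alpha>) * dl j)) {tm j..tm (Suc j)}"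
    using has_integral_mult_left[OF k] .
  moreover have "((\<lambda>s. kk l s * Y' s) has_integral integral {tm j..tm (Suc j)} (\<lambda>s. kk l s * Y' s)) {tm j..tm (Suc j)}"
    using kY_int[OF assms] by (simp add: integrable_integral)
  ultimately have "((\<lambda>s. kk l s * dl j - kk l s * Y' s) has_integral
      (bc \<alpha> l j * ta j * Gamma (1 - \<alpha>) * dl j - integral {tm j..tm (Suc j)} (\<lambda>s. kk l s * Y' s))) {tm j..tm (Suc j)}"
    by (rule has_integral_diff)
  then have "II l j = bc \<alpha> l j * ta j * Gamma (1 - \<alpha>) * dl j - integral {tm j..tm (Suc j)} (\<lambda>s. kk l s * Y' s)"
    unfolding II_def by (simp add: right_diff_distrib integral_unique)
  then show ?thesis using dl_eq[of j] by (simp add: ac_simps)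
qed

lemma decomp:
  assumes "1 \<le> l" "l \<le> n"
  shows "(\<Sum>j<l. bc \<alpha> l j * (Y (tm (Suc j)) - Y (tm j))) - integral {0..tm l} (\<lambda>s. (tm l - s) powr (- \<alpha>) * Y' s) / Gamma (1 - \<alpha>)
       = (\<Sum>j<l. II l j) / Gamma (1 - \<alpha>)"
proof -
  have "0 < tm l" using tm_pos assms by simp
  moreover have "tm l \<le> T" using tm_le_T assms by simp
  ultimately have int: "(\<lambda>s. kk l s * Y' s) integrable_on {0..tm l}" unfolding kk_def using Yint by simp
  have sp: "integral {0..tm l} (\<lambda>s. kk l s * Y' s) = (\<Sum>j<l. integral {tm j..tm (Suc j)} (\<lambda>s. kk l s * Y' s))"
    by (rule integral_split_sum[where t = tm, OF tm_mono tm_0 int]) auto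
  have "(\<Sum>j<l. II l j) = (\<Sum>j<l. bc \<alpha> l j * (Y (tm (Suc j)) - Y (tm j)) * Gamma (1 - \<alpha>)) - integral {0..tm l} (\<lambda>s. kk l s * Y' s)"
    unfolding sp sum_subtractf[symmetric] using II_alt assms by (intro sum.cong) auto
  moreover have "(\<Sum>j<l. bc \<alpha> l j * (Y (tm (Suc j)) - Y (tm j)) * Gamma (1 - \<alpha>))
      = (\<Sum>j<l. bc \<alpha> l j * (Y (tm (Suc j)) - Y (tm j))) * Gamma (1 - \<alpha>)"
    by (simp add: sum_distrib_right)
  ultimately have "(\<Sum>j<l. II l j) / Gamma (1 - \<alpha>) = (\<Sum>j<l. bc \<alpha> l j * (Y (tm (Suc j)) - Y (tm j))) - integral {0..tm l} (\<lambda>s. kk l s * Y' s) / Gamma (1 - \<alpha>)"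
    using G_pos by (simp add: diff_divide_distrib)
  then show ?thesis unfolding kk_def by simp
qed

end

context tfun begin

lemma kk_mono:
  assumes "s \<le> s'" "s' < tm l"
  shows "kk l s \<le> kk l s'"
  unfolding kk_def using assms a0 by (intro powr_mono2') auto

lemma kk_nonneg: "0 \<le> kk l s" unfolding kk_def by simp

lemma dl_close:
  assumes j: "1 \<le> j" "Suc j \<le> n" and s: "s \<in> {tm j..tm (Suc j)}"
  shows "\<bar>dl j - Y' s\<bar> \<le> C0 * (1 + tm j powr (\<alpha> - 2)) * ta j"
proof -
  let ?S = "{tm j..tm (Suc j)}"
  let ?M = "C0 * (1 + tm j powr (\<alpha> - 2))"
  have tj: "0 < tm j" using tm_pos j by simp
  have sub: "?S \<subseteq> {0<..T}" using tj tm_le_T[of "Suc j"] j by auto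
  have sub2: "?S \<subseteq> {0..T}" using sub by auto
  have d1: "(Y has_real_derivative Y' u) (at u within ?S)" if "u \<in> ?S" for u
  proof -
    have "u \<in> {0<..T}" using that sub by auto
    from DERIV_subset[OF dY[OF this] sub2] show ?thesis .
  qed
  have d2: "(Y' has_real_derivative Y'' u) (at u within ?S)" if "u \<in> ?S" for u
  proof -
    have "u \<in> {0<..T}" using that sub by auto
    from DERIV_subset[OF dY'[OF this] sub2] show ?thesis .
  qed
  have bM: "\<bar>Y'' u\<bar> \<le> ?M" if "u \<in> ?S" for u
  proof -
    have "u powr (\<alpha> - 2) \<le> tm j powr (\<alpha> - 2)" using that tj a1 by (intro powr_mono2') auto
    then have "C0 * (1 + u powr (\<alpha> - 2)) \<le> ?M" using C0 by (intro mult_left_mono) auto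
    moreover have "u \<in> {0<..T}" using that sub by auto
    ultimately show ?thesis using b2[of u] by linarith
  qed
  have lipY': "\<bar>Y' u - Y' s\<bar> \<le> ?M * ta j" if "u \<in> ?S" for u
  proof -
    have "\<bar>Y' u - Y' s\<bar> \<le> ?M * \<bar>u - s\<bar>" by (rule lip_on[OF d2 bM that s])
    also have "\<dots> \<le> ?M * ta j"
      using that s C0 tj unfolding tau_def by (intro mult_left_mono) (auto simp: abs_le_iff)
    finally show ?thesis .
  qed
  have d3: "((\<lambda>u. Y u - u * Y' s) has_real_derivative Y' u - Y' s) (at u within ?S)" if "u \<in> ?S" for u
    using d1[OF that] by (auto intro!: derivative_eq_intros)
  have "\<bar>(Y (tm (Suc j)) - tm (Suc j) * Y' s) - (Y (tm j) - tm j * Y' s)\<bar> \<le> (?M * ta j) * \<bar>tm (Suc j) - tm j\<bar>"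
    by (rule lip_on[OF d3 lipY']) (use tm_mono[of j "Suc j"] in auto)
  also have "(Y (tm (Suc j)) - tm (Suc j) * Y' s) - (Y (tm j) - tm j * Y' s) = ta j * (dl j - Y' s)"
    using dl_eq[of j] unfolding tau_def by (simp add: algebra_simps)
  finally have "ta j * \<bar>dl j - Y' s\<bar> \<le> ta j * (?M * ta j)"
    using ta_pos[of j] unfolding tau_def by (simp add: abs_mult mult.commute)
  then show ?thesis using ta_pos[of j] by simp
qed

lemma II_int:
  assumes "j < l" "l \<le> n"
  shows "(\<lambda>s. kk l s * (dl j - Y' s)) integrable_on {tm j..tm (Suc j)}"
proof -
  have k: "((\<lambda>s. kk l s) has_integral (bc \<alpha> l j * ta j * Gamma (1 - \<alpha>))) {tm j..tm (Suc j)}"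
    unfolding kk_def using bc_integral[OF a0 a1 assms(1)] .
  have "(\<lambda>s. kk l s * dl j) integrable_on {tm j..tm (Suc j)}"
    using has_integral_mult_left[OF k] by blast
  then have "(\<lambda>s. kk l s * dl j - kk l s * Y' s) integrable_on {tm j..tm (Suc j)}"
    using kY_int[OF assms] by (rule integrable_diff)
  then show ?thesis by (simp add: right_diff_distrib)
qed

lemma II_middle:
  assumes j: "1 \<le> j" "Suc j < l" "l \<le> n"
  shows "\<bar>II l j\<bar> \<le> ta j ^ 2 * (C0 * (1 + tm j powr (\<alpha> - 2))) * (kk l (tm (Suc j)) - kk l (tm j))"
proof -
  let ?S = "{tm j..tm (Suc j)}"
  let ?M = "C0 * (1 + tm j powr (\<alpha> - 2))"
  let ?D = "kk l (tm (Suc j)) - kk l (tm j)"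
  have jn: "j < n" using j by simp
  have z: "((\<lambda>s. dl j - Y' s) has_integral 0) ?S"
  proof -
    have "((\<lambda>s. dl j) has_integral (Henstock_Kurzweil_Integration.content ?S *\<^sub>R dl j)) ?S" by (rule has_integral_const_real)
    moreover have "Henstock_Kurzweil_Integration.content ?S *\<^sub>R dl j = Y (tm (Suc j)) - Y (tm j)"
      using tm_mono[of j "Suc j"] dl_eq[of j] unfolding tau_def by (simp add: mult.commute)
    ultimately have "((\<lambda>s. dl j) has_integral (Y (tm (Suc j)) - Y (tm j))) ?S" by simp
    from has_integral_diff[OF this Yftc[OF jn]] show ?thesis by simp
  qed
  then have z2: "((\<lambda>s. kk l (tm j) * (dl j - Y' s)) has_integral 0) ?S"
    using has_integral_mult_right[OF z, of "kk l (tm j)"] by simp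
  have i1: "(\<lambda>s. kk l s * (dl j - Y' s)) integrable_on ?S" using II_int j by simp
  have "((\<lambda>s. kk l s * (dl j - Y' s) - kk l (tm j) * (dl j - Y' s)) has_integral (II l j - 0)) ?S"
    unfolding II_def using has_integral_diff[OF integrable_integral[OF i1] z2] .
  then have f: "((\<lambda>s. (kk l s - kk l (tm j)) * (dl j - Y' s)) has_integral II l j) ?S"
    by (simp add: left_diff_distrib)
  have bnd: "norm ((kk l s - kk l (tm j)) * (dl j - Y' s)) \<le> ?D * (?M * ta j)" if "s \<in> cbox (tm j) (tm (Suc j))" for s
  proof -
    have s: "s \<in> ?S" using that by simp
    have tl: "tm (Suc j) < tm l" using tm_less j by simp
    have "kk l (tm j) \<le> kk l s" "kk l s \<le> kk l (tm (Suc j))"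
      using kk_mono s tl by auto
    then have "\<bar>kk l s - kk l (tm j)\<bar> \<le> ?D" by simp
    moreover have "\<bar>dl j - Y' s\<bar> \<le> ?M * ta j" using dl_close[of j s] j s by simp
    ultimately show ?thesis unfolding real_norm_def abs_mult by (intro mult_mono) auto
  qed
  have D0: "0 \<le> ?D" using kk_mono[of "tm j" "tm (Suc j)" l] tm_mono[of j "Suc j"] tm_less[of "Suc j" l] j by simp
  have "norm (II l j) \<le> ?D * (?M * ta j) * Henstock_Kurzweil_Integration.content (cbox (tm j) (tm (Suc j)))"
    by (rule has_integral_bound[where f = "\<lambda>s. (kk l s - kk l (tm j)) * (dl j - Y' s)"])
       (use f bnd D0 C0 ta_pos[of j] in \<open>auto intro!: mult_nonneg_nonneg simp: add_nonneg_nonneg\<close>)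
  also have "Henstock_Kurzweil_Integration.content (cbox (tm j) (tm (Suc j))) = ta j"
    using tm_mono[of j "Suc j"] unfolding tau_def by simp
  finally show ?thesis by (simp add: power2_eq_square ac_simps)
qed

lemma II_last:
  assumes l: "2 \<le> l" "l \<le> n"
  shows "\<bar>II l (l - 1)\<bar> \<le> ta (l - 1) powr (2 - \<alpha>) * (C0 * (1 + tm (l - 1) powr (\<alpha> - 2))) / (1 - \<alpha>)"
proof -
  define j where "j = l - 1"
  have jl: "Suc j = l" "1 \<le> j" "j < l" using l unfolding j_def by auto
  let ?S = "{tm j..tm (Suc j)}"
  let ?M = "C0 * (1 + tm j powr (\<alpha> - 2))"
  have M0: "0 \<le> ?M" using C0 by simp
  have i1: "(\<lambda>s. kk l s * (dl j - Y' s)) integrable_on ?S" using II_int[of j l] jl l by simp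
  have g: "((\<lambda>s. kk l s * (?M * ta j)) has_integral (ta j powr (1 - \<alpha>) / (1 - \<alpha>) * (?M * ta j))) ?S"
  proof -
    have "((\<lambda>s. (tm l - s) powr (- \<alpha>)) has_integral
           ((tm l - tm j) powr (1 - \<alpha>) - (tm l - tm l) powr (1 - \<alpha>)) / (1 - \<alpha>)) {tm j..tm l}"
      by (rule kernel_has_integral) (use tm_mono jl a0 a1 in auto)
    then have "((\<lambda>s. kk l s) has_integral ta j powr (1 - \<alpha>) / (1 - \<alpha>)) ?S"
      unfolding kk_def tau_def using jl a1 by simp
    from has_integral_mult_left[OF this] show ?thesis .
  qed
  have "norm (II l j) \<le> integral ?S (\<lambda>s. kk l s * (?M * ta j))"
    unfolding II_def
  proof (rule integral_norm_bound_integral[OF i1])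
    show "(\<lambda>s. kk l s * (?M * ta j)) integrable_on ?S" using g by blast
    fix s assume s: "s \<in> ?S"
    have "\<bar>dl j - Y' s\<bar> \<le> ?M * ta j" using dl_close[of j s] jl l s by simp
    then show "norm (kk l s * (dl j - Y' s)) \<le> kk l s * (?M * ta j)"
      unfolding real_norm_def abs_mult using kk_nonneg[of l s] by (simp add: mult_left_mono)
  qed
  also have "\<dots> = ta j powr (1 - \<alpha>) / (1 - \<alpha>) * (?M * ta j)" using g by (rule integral_unique)
  also have "\<dots> = ta j powr (2 - \<alpha>) * ?M / (1 - \<alpha>)"
  proof -
    have "ta j powr (1 - \<alpha>) * ta j = ta j powr (2 - \<alpha>)"
    proof -
      have "ta j powr (2 - \<alpha>) = ta j powr ((1 - \<alpha>) + 1)" by simp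
      also have "\<dots> = ta j powr (1 - \<alpha>) * ta j powr 1" by (rule powr_add)
      finally show ?thesis using ta_pos[of j] by simp
    qed
    then show ?thesis by (simp add: field_simps)
  qed
  finally show ?thesis unfolding j_def by simp
qed

end

context tfun begin

definition "ZZ s = (if s = 0 then 0 else Y' s)"

lemma t1_pos: "0 < tm 1" using tm_pos by simp
lemma t1_le: "tm 1 \<le> T" using tm_le_T n_ge by simp
lemma ta0: "ta 0 = tm 1" unfolding tau_def by simp

lemma ZZ_int: "(ZZ has_integral (Y (tm 1) - Y 0)) {0..tm 1}"
proof -
  have "(Y' has_integral (Y (tm 1) - Y (tm 0))) {tm 0..tm (Suc 0)}" using Yftc[of 0] n_ge by simp
  then have "(Y' has_integral (Y (tm 1) - Y 0)) {0..tm 1}" by simp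
  then show ?thesis
    using has_integral_spike_finite_eq[of "{0}" "{0..tm 1}" ZZ Y'] by (auto simp: ZZ_def)
qed

lemma ZZ_b: "s \<in> {0..T} \<Longrightarrow> \<bar>ZZ s\<bar> \<le> C0 * (1 + s powr (\<alpha> - 1))"
  unfolding ZZ_def using b1[of s] C0 by auto

lemma g_int: "((\<lambda>s. C0 * (1 + s powr (\<alpha> - 1))) has_integral C0 * (tm 1 + tm 1 powr \<alpha> / \<alpha>)) {0..tm 1}"
proof -
  have "((\<lambda>s. 1) has_integral tm 1) {0..tm 1}"
    using has_integral_const_real[of "1::real" 0 "tm 1"] less_imp_le[OF t1_pos] by simp
  moreover have "((\<lambda>s. s powr (\<alpha> - 1)) has_integral tm 1 powr \<alpha> / \<alpha>) {0..tm 1}"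
    using spow_has_integral[of 0 "tm 1" \<alpha>] t1_pos a0 by simp
  ultimately have "((\<lambda>s. 1 + s powr (\<alpha> - 1)) has_integral (tm 1 + tm 1 powr \<alpha> / \<alpha>)) {0..tm 1}"
    by (rule has_integral_add)
  from has_integral_mult_right[OF this, of C0] show ?thesis .
qed

lemma dY0: "\<bar>Y (tm 1) - Y 0\<bar> \<le> C0 * (tm 1 + tm 1 powr \<alpha> / \<alpha>)"
proof -
  have N: "norm (integral {0..tm 1} ZZ) \<le> integral {0..tm 1} (\<lambda>s. C0 * (1 + s powr (\<alpha> - 1)))"
  proof (rule integral_norm_bound_integral)
    show "ZZ integrable_on {0..tm 1}" using ZZ_int by blast
    show "(\<lambda>s. C0 * (1 + s powr (\<alpha> - 1))) integrable_on {0..tm 1}" using g_int by blast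
    fix s assume "s \<in> {0..tm 1}"
    then show "norm (ZZ s) \<le> C0 * (1 + s powr (\<alpha> - 1))" using ZZ_b[of s] t1_le by simp
  qed
  then show ?thesis unfolding integral_unique[OF ZZ_int] integral_unique[OF g_int] real_norm_def .
qed

lemma II0_spike:
  assumes "1 \<le> l" "l \<le> n"
  shows "II l 0 = integral {0..tm 1} (\<lambda>s. kk l s * (dl 0 - ZZ s))"
    and "(\<lambda>s. kk l s * (dl 0 - ZZ s)) integrable_on {0..tm 1}"
proof -
  have i: "(\<lambda>s. kk l s * (dl 0 - Y' s)) integrable_on {0..tm 1}" using II_int[of 0 l] assms by simp
  show "II l 0 = integral {0..tm 1} (\<lambda>s. kk l s * (dl 0 - ZZ s))"
    unfolding II_def by (simp, rule integral_spike[of "{0}"]) (auto simp: ZZ_def)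
  show "(\<lambda>s. kk l s * (dl 0 - ZZ s)) integrable_on {0..tm 1}"
    by (rule integrable_spike_finite[of "{0}", OF _ _ i]) (auto simp: ZZ_def)
qed

lemma II_first2:
  assumes l: "2 \<le> l" "l \<le> n"
  shows "\<bar>II l 0\<bar> \<le> 2 * C0 * (tm l - tm 1) powr (- \<alpha>) * (tm 1 + tm 1 powr \<alpha> / \<alpha>)"
proof -
  let ?K = "kk l (tm 1)"
  have t1l: "tm 1 < tm l" using tm_less l by simp
  have K0: "0 \<le> ?K" by (rule kk_nonneg)
  have g: "((\<lambda>s. ?K * (\<bar>dl 0\<bar> + C0 * (1 + s powr (\<alpha> - 1)))) has_integral
      ?K * (\<bar>dl 0\<bar> * tm 1 + C0 * (tm 1 + tm 1 powr \<alpha> / \<alpha>))) {0..tm 1}"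
  proof -
    have "((\<lambda>s. \<bar>dl 0\<bar>) has_integral \<bar>dl 0\<bar> * tm 1) {0..tm 1}"
      using has_integral_const_real[of "\<bar>dl 0\<bar>" 0 "tm 1"] less_imp_le[OF t1_pos] by (simp add: mult.commute)
    from has_integral_add[OF this g_int] show ?thesis by (rule has_integral_mult_right)
  qed
  have eq: "II l 0 = integral {0..tm 1} (\<lambda>s. kk l s * (dl 0 - ZZ s))" using II0_spike(1)[of l] l by simp
  have int: "(\<lambda>s. kk l s * (dl 0 - ZZ s)) integrable_on {0..tm 1}" using II0_spike(2)[of l] l by simp
  have "norm (II l 0) \<le> integral {0..tm 1} (\<lambda>s. ?K * (\<bar>dl 0\<bar> + C0 * (1 + s powr (\<alpha> - 1))))"
    unfolding eq
  proof (rule integral_norm_bound_integral[OF int])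
    show "(\<lambda>s. ?K * (\<bar>dl 0\<bar> + C0 * (1 + s powr (\<alpha> - 1)))) integrable_on {0..tm 1}" using g by blast
    fix s assume s: "s \<in> {0..tm 1}"
    have "kk l s \<le> ?K" using kk_mono[of s "tm 1" l] s t1l by simp
    moreover have "\<bar>dl 0 - ZZ s\<bar> \<le> \<bar>dl 0\<bar> + C0 * (1 + s powr (\<alpha> - 1))"
      using ZZ_b[of s] s t1_le by (auto simp: abs_le_iff)
    ultimately show "norm (kk l s * (dl 0 - ZZ s)) \<le> ?K * (\<bar>dl 0\<bar> + C0 * (1 + s powr (\<alpha> - 1)))"
      unfolding real_norm_def abs_mult using kk_nonneg[of l s]
      by (intro mult_mono) auto
  qed
  also have "\<dots> = ?K * (\<bar>dl 0\<bar> * tm 1 + C0 * (tm 1 + tm 1 powr \<alpha> / \<alpha>))" using g by (rule integral_unique)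
  also have "\<dots> \<le> ?K * (2 * (C0 * (tm 1 + tm 1 powr \<alpha> / \<alpha>)))"
  proof -
    have "\<bar>dl 0\<bar> * tm 1 = \<bar>Y (tm 1) - Y 0\<bar>"
    proof -
      have "\<bar>dl 0 * tm 1\<bar> = \<bar>Y (tm 1) - Y 0\<bar>" using dl_eq[of 0] ta0 by simp
      then show ?thesis using t1_pos by (simp add: abs_mult)
    qed
    then show ?thesis using dY0 K0 by (intro mult_left_mono) auto
  qed
  finally show ?thesis unfolding kk_def by (simp add: algebra_simps)
qed

lemma powr_facts:
  fixes q a :: real assumes q: "0 < q"
  shows "q powr (1 - a) * (q / 2) powr (a - 1) = 2 powr (1 - a)"
    and "(q / 2) powr (- a) * q powr a = 2 powr a"
    and "q powr (1 - a) * q powr a = q"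
proof -
  have e: "q powr (1 - a) * q powr (a - 1) = 1"
    using q by (simp add: powr_add[symmetric])
  have "(q / 2) powr (a - 1) = q powr (a - 1) / 2 powr (a - 1)" using q by (simp add: powr_divide)
  moreover have "1 / 2 powr (a - 1) = (2::real) powr (1 - a)"
    by (simp add: powr_minus_divide[symmetric] )
  ultimately show "q powr (1 - a) * (q / 2) powr (a - 1) = 2 powr (1 - a)"
    using e by (metis (no_types, lifting) times_divide_eq_right)
  have "(q / 2) powr (- a) = q powr (- a) / 2 powr (- a)" using q by (simp add: powr_divide)
  moreover have "q powr (- a) * q powr a = 1" using q by (simp add: powr_add[symmetric])
  moreover have "1 / 2 powr (- a) = (2::real) powr a" by (simp add: powr_minus_divide)
  ultimately show "(q / 2) powr (- a) * q powr a = 2 powr a"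
    by (metis (no_types, lifting) mult.commute times_divide_eq_left)
  show "q powr (1 - a) * q powr a = q" using q by (simp add: powr_add[symmetric])
qed

definition "B1 = C0 * ((2 * T powr (1 - \<alpha>) + 1 / \<alpha> + 2 powr (1 - \<alpha>)) / (1 - \<alpha>) + 2 powr \<alpha> / \<alpha>)"

lemma II_first1: "\<bar>II 1 0\<bar> \<le> B1"
proof -
  define q where "q = tm 1"
  have q: "0 < q" "q \<le> T" unfolding q_def using t1_pos t1_le by auto
  define c1 where "c1 = (q / 2) powr (\<alpha> - 1)"
  define c2 where "c2 = (q / 2) powr (- \<alpha>)"
  define A where "A = \<bar>dl 0\<bar> + C0 + C0 * c1"
  have c1: "0 \<le> c1" unfolding c1_def by simp
  have c2: "0 \<le> c2" unfolding c2_def by simp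
  have k: "((\<lambda>s. kk 1 s) has_integral q powr (1 - \<alpha>) / (1 - \<alpha>)) {0..q}"
    using kernel_has_integral[of 0 q q \<alpha>] q a0 a1 unfolding kk_def q_def by simp
  have sp: "((\<lambda>s. s powr (\<alpha> - 1)) has_integral q powr \<alpha> / \<alpha>) {0..q}"
    using spow_has_integral[of 0 q \<alpha>] q a0 by simp
  have g: "((\<lambda>s. kk 1 s * A + C0 * c2 * s powr (\<alpha> - 1)) has_integral
      (q powr (1 - \<alpha>) / (1 - \<alpha>) * A + C0 * c2 * (q powr \<alpha> / \<alpha>))) {0..q}"
    by (intro has_integral_add has_integral_mult_left has_integral_mult_right k sp)
  have eq: "II 1 0 = integral {0..q} (\<lambda>s. kk 1 s * (dl 0 - ZZ s))" using II0_spike(1)[of 1] n_ge q_def by simp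
  have int: "(\<lambda>s. kk 1 s * (dl 0 - ZZ s)) integrable_on {0..q}" using II0_spike(2)[of 1] n_ge q_def by simp
  have "norm (II 1 0) \<le> integral {0..q} (\<lambda>s. kk 1 s * A + C0 * c2 * s powr (\<alpha> - 1))"
    unfolding eq
  proof (rule integral_norm_bound_integral[OF int])
    show "(\<lambda>s. kk 1 s * A + C0 * c2 * s powr (\<alpha> - 1)) integrable_on {0..q}" using g by blast
    fix s assume s: "s \<in> {0..q}"
    have kp: "0 \<le> kk 1 s" by (rule kk_nonneg)
    have sp0: "0 \<le> s powr (\<alpha> - 1)" by simp
    have key: "kk 1 s * s powr (\<alpha> - 1) \<le> c2 * s powr (\<alpha> - 1) + c1 * kk 1 s"
    proof (cases "s \<le> q / 2")
      case True
      have "kk 1 s \<le> c2" unfolding kk_def c2_def q_def[symmetric]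
        using True q a0 by (intro powr_mono2') auto
      then have "kk 1 s * s powr (\<alpha> - 1) \<le> c2 * s powr (\<alpha> - 1)" using sp0 by (rule mult_right_mono)
      then show ?thesis using c1 kp by (simp add: add_increasing2)
    next
      case False
      have "s powr (\<alpha> - 1) \<le> c1" unfolding c1_def
        using False q a1 by (intro powr_mono2') auto
      then have "kk 1 s * s powr (\<alpha> - 1) \<le> c1 * kk 1 s" using kp by (simp add: mult_right_mono mult.commute)
      then show ?thesis using c2 sp0 by (simp add: add_increasing)
    qed
    have "\<bar>ZZ s\<bar> \<le> C0 * (1 + s powr (\<alpha> - 1))" using ZZ_b[of s] s q by simp
    then have "\<bar>dl 0 - ZZ s\<bar> \<le> \<bar>dl 0\<bar> + C0 + C0 * s powr (\<alpha> - 1)" by (simp add: abs_le_iff distrib_left) (smt (verit) abs_ge_self abs_ge_minus_self)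
    then have "norm (kk 1 s * (dl 0 - ZZ s)) \<le> kk 1 s * (\<bar>dl 0\<bar> + C0 + C0 * s powr (\<alpha> - 1))"
      unfolding real_norm_def abs_mult using kp by (simp add: mult_left_mono)
    also have "\<dots> = kk 1 s * (\<bar>dl 0\<bar> + C0) + C0 * (kk 1 s * s powr (\<alpha> - 1))" by (simp add: algebra_simps)
    also have "\<dots> \<le> kk 1 s * (\<bar>dl 0\<bar> + C0) + C0 * (c2 * s powr (\<alpha> - 1) + c1 * kk 1 s)"
      using key C0 by (intro add_left_mono mult_left_mono) auto
    also have "\<dots> = kk 1 s * A + C0 * c2 * s powr (\<alpha> - 1)" unfolding A_def by (simp add: algebra_simps)
    finally show "norm (kk 1 s * (dl 0 - ZZ s)) \<le> kk 1 s * A + C0 * c2 * s powr (\<alpha> - 1)" .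
  qed
  also have "\<dots> = q powr (1 - \<alpha>) / (1 - \<alpha>) * A + C0 * c2 * (q powr \<alpha> / \<alpha>)" using g by (rule integral_unique)
  also have "\<dots> = (q powr (1 - \<alpha>) * \<bar>dl 0\<bar> + C0 * q powr (1 - \<alpha>) + C0 * (q powr (1 - \<alpha>) * c1)) / (1 - \<alpha>)
                    + C0 * (c2 * q powr \<alpha>) / \<alpha>"
    unfolding A_def by (simp add: algebra_simps add_divide_distrib)
  also have "\<dots> \<le> (C0 * (T powr (1 - \<alpha>) + 1 / \<alpha>) + C0 * T powr (1 - \<alpha>) + C0 * 2 powr (1 - \<alpha>)) / (1 - \<alpha>)
                    + C0 * 2 powr \<alpha> / \<alpha>"
  proof -
    have f1: "q powr (1 - \<alpha>) * c1 = 2 powr (1 - \<alpha>)" unfolding c1_def using powr_facts(1)[OF q(1)] .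
    have f2: "c2 * q powr \<alpha> = 2 powr \<alpha>" unfolding c2_def using powr_facts(2)[OF q(1)] .
    have qT: "q powr (1 - \<alpha>) \<le> T powr (1 - \<alpha>)" using q a1 by (intro powr_mono2) auto
    have d0: "\<bar>dl 0\<bar> * q \<le> C0 * (q + q powr \<alpha> / \<alpha>)"
    proof -
      have "\<bar>dl 0 * q\<bar> = \<bar>Y (tm 1) - Y 0\<bar>" using dl_eq[of 0] ta0 q_def by simp
      then show ?thesis using dY0 q unfolding q_def by (simp add: abs_mult)
    qed
    have "q powr (1 - \<alpha>) * \<bar>dl 0\<bar> = q powr (1 - \<alpha>) * (\<bar>dl 0\<bar> * q) / q" using q by simp
    also have "\<dots> \<le> q powr (1 - \<alpha>) * (C0 * (q + q powr \<alpha> / \<alpha>)) / q"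
      using d0 q by (intro divide_right_mono mult_left_mono) auto
    also have "\<dots> = C0 * (q powr (1 - \<alpha>) + (q powr (1 - \<alpha>) * q powr \<alpha>) / (\<alpha> * q))"
      using q a0 by (simp add: field_simps)
    also have "\<dots> = C0 * (q powr (1 - \<alpha>) + 1 / \<alpha>)" using powr_facts(3)[OF q(1), of \<alpha>] q a0 by simp
    also have "\<dots> \<le> C0 * (T powr (1 - \<alpha>) + 1 / \<alpha>)" using qT C0 by simp
    finally have h1: "q powr (1 - \<alpha>) * \<bar>dl 0\<bar> \<le> C0 * (T powr (1 - \<alpha>) + 1 / \<alpha>)" .
    have h2: "C0 * q powr (1 - \<alpha>) \<le> C0 * T powr (1 - \<alpha>)" using qT C0 by simp
    show ?thesis unfolding f1 f2 using h1 h2 a1 a0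
      by (intro add_mono divide_right_mono) auto
  qed
  also have "\<dots> = B1" unfolding B1_def by (simp add: algebra_simps add_divide_distrib)
  finally show ?thesis by simp
qed

end

lemma gl:
  fixes N x a b :: real
  assumes "1 \<le> N" "0 < x" "x \<le> 1" "1 \<le> N * x"
  shows "N powr (- b) * x powr (a - b) \<le> N powr (- min a b)"
proof (cases "b \<le> a")
  case True
  have "x powr (a - b) \<le> 1" using assms True by (intro powr_le1) auto
  then have "N powr (- b) * x powr (a - b) \<le> N powr (- b)" by (simp add: mult_left_le)
  then show ?thesis using True by (simp add: min_def)
next
  case False
  have x1: "1 / N \<le> x" using assms by (simp add: field_simps)
  have "x powr (a - b) \<le> (1 / N) powr (a - b)" using False assms x1 by (intro powr_mono2') auto
  also have "\<dots> = N powr (b - a)" using assms by (simp add: powr_divide powr_minus_divide[symmetric])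
  finally have "N powr (- b) * x powr (a - b) \<le> N powr (- b) * N powr (b - a)" by (simp add: mult_left_mono)
  also have "\<dots> = N powr (- a)" by (simp add: powr_add[symmetric])
  finally show ?thesis using False by (simp add: min_def)
qed

context tfun begin

abbreviation "NN \<equiv> real n"
abbreviation "gam \<equiv> min (2 - \<alpha>) (r * \<alpha>)"

lemma tm_x: "tm j = (real j / NN) powr r * T" unfolding tmesh_def by simp

lemma tm_powr: "tm j powr p = (real j / NN) powr (r * p) * T powr p"
  unfolding tm_x using T_pos by (simp add: powr_mult powr_powr)

lemma KEY:
  assumes "1 \<le> l" "l \<le> n"
  shows "NN powr (\<alpha> - 2) * (real l / NN) powr (\<alpha> - 2) \<le> T powr \<alpha> * (NN powr (- gam) * tm l powr (- \<alpha>))"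
proof -
  define x where "x = real l / NN"
  have x: "0 < x" "x \<le> 1" "1 \<le> NN * x" using assms n_pos unfolding x_def by auto
  have N1: "1 \<le> NN" using n_ge by simp
  have "NN powr (- (2 - \<alpha>)) * x powr (r * \<alpha> - (2 - \<alpha>)) \<le> NN powr (- min (r * \<alpha>) (2 - \<alpha>))"
    by (rule gl[OF N1 x])
  then have g: "NN powr (- (2 - \<alpha>)) * x powr (r * \<alpha> - (2 - \<alpha>)) \<le> NN powr (- gam)"
    by (simp add: min.commute)
  have "NN powr (\<alpha> - 2) * x powr (\<alpha> - 2) = (NN powr (- (2 - \<alpha>)) * x powr (r * \<alpha> - (2 - \<alpha>))) * x powr (- (r * \<alpha>))"
    using x by (simp add: powr_add[symmetric])
  also have "\<dots> \<le> NN powr (- gam) * x powr (- (r * \<alpha>))"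
    using g by (rule mult_right_mono) simp
  also have "\<dots> = T powr \<alpha> * (NN powr (- gam) * tm l powr (- \<alpha>))"
    unfolding tm_powr x_def[symmetric] using T_pos by (simp add: powr_minus field_simps)
  finally show ?thesis unfolding x_def .
qed

lemma KEY3: "tm 1 powr \<alpha> \<le> T powr \<alpha> * NN powr (- gam)"
proof -
  have "tm 1 powr \<alpha> = (1 / NN) powr (r * \<alpha>) * T powr \<alpha>" unfolding tm_powr by simp
  also have "(1 / NN) powr (r * \<alpha>) = NN powr (- (r * \<alpha>))"
    using n_pos by (simp add: powr_divide powr_minus_divide)
  also have "NN powr (- (r * \<alpha>)) \<le> NN powr (- gam)"
    using n_ge by (intro powr_mono) auto
  finally show ?thesis using T_pos by (simp add: mult.commute mult_left_mono)
qed

lemma tl_pos: "1 \<le> l \<Longrightarrow> 0 < tm l" using tm_pos by simp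

lemma x_facts: "1 \<le> j \<Longrightarrow> j \<le> n \<Longrightarrow> 0 < real j / NN \<and> real j / NN \<le> 1 \<and> 1 \<le> NN * (real j / NN)"
  using n_pos by auto

lemma tm_l_ge_2t1:
  assumes "2 \<le> l"
  shows "2 * tm 1 \<le> tm l"
proof -
  have "tm l = real l powr r * tm 1"
    unfolding tm_x using n_pos by (simp add: powr_divide)
  moreover have "2 \<le> real l powr r"
  proof -
    have "real l powr 1 \<le> real l powr r" using assms r_ge by (intro powr_mono) auto
    then show ?thesis using assms by simp
  qed
  ultimately show ?thesis using t1_pos by (simp add: mult_right_mono)
qed

definition "Kb = 2 * C0 * 2 powr \<alpha> * (T powr (1 - \<alpha>) + 1 / \<alpha>) * T powr \<alpha>"

lemma first_l2:
  assumes l: "2 \<le> l" "l \<le> n"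
  shows "\<bar>II l 0\<bar> \<le> Kb * (NN powr (- gam) * tm l powr (- \<alpha>))"
proof -
  have tl: "0 < tm l" using tl_pos l by simp
  have A: "(tm l - tm 1) powr (- \<alpha>) \<le> 2 powr \<alpha> * tm l powr (- \<alpha>)"
  proof -
    have "tm l / 2 \<le> tm l - tm 1" using tm_l_ge_2t1[OF l(1)] by simp
    then have "(tm l - tm 1) powr (- \<alpha>) \<le> (tm l / 2) powr (- \<alpha>)" using tl a0 by (intro powr_mono2') auto
    also have "\<dots> = 2 powr \<alpha> * tm l powr (- \<alpha>)" using tl by (simp add: powr_divide powr_minus_divide field_simps)
    finally show ?thesis .
  qed
  have B: "tm 1 + tm 1 powr \<alpha> / \<alpha> \<le> (T powr (1 - \<alpha>) + 1 / \<alpha>) * tm 1 powr \<alpha>"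
  proof -
    have "tm 1 = tm 1 powr (1 - \<alpha>) * tm 1 powr \<alpha>" using powr_facts(3)[OF t1_pos, of \<alpha>] by simp
    also have "\<dots> \<le> T powr (1 - \<alpha>) * tm 1 powr \<alpha>" using t1_le t1_pos a1 by (intro mult_right_mono powr_mono2) auto
    finally show ?thesis by (simp add: algebra_simps)
  qed
  have "\<bar>II l 0\<bar> \<le> 2 * C0 * (tm l - tm 1) powr (- \<alpha>) * (tm 1 + tm 1 powr \<alpha> / \<alpha>)" by (rule II_first2[OF l])
  also have "\<dots> \<le> 2 * C0 * (2 powr \<alpha> * tm l powr (- \<alpha>)) * ((T powr (1 - \<alpha>) + 1 / \<alpha>) * (T powr \<alpha> * NN powr (- gam)))"
    using A B KEY3 C0 a0 t1_pos by (intro mult_mono mult_left_mono order_trans[OF B]) (auto intro!: add_nonneg_nonneg)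
  also have "\<dots> = Kb * (NN powr (- gam) * tm l powr (- \<alpha>))" unfolding Kb_def by (simp add: ac_simps)
  finally show ?thesis .
qed

lemma first_l1: "\<bar>II 1 0\<bar> \<le> B1 * T powr \<alpha> * (NN powr (- gam) * tm 1 powr (- \<alpha>))"
proof -
  have B0: "0 \<le> B1" unfolding B1_def using C0 a0 a1 by (intro mult_nonneg_nonneg add_nonneg_nonneg divide_nonneg_pos) auto
  have "1 \<le> T powr \<alpha> * NN powr (- gam) * tm 1 powr (- \<alpha>)"
  proof -
    have "tm 1 powr \<alpha> * tm 1 powr (- \<alpha>) = 1" using t1_pos by (simp add: powr_add[symmetric])
    then show ?thesis using KEY3 t1_pos by (metis mult_right_mono powr_ge_zero)
  qed
  then have "B1 * 1 \<le> B1 * (T powr \<alpha> * NN powr (- gam) * tm 1 powr (- \<alpha>))" using B0 by (rule mult_left_mono)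
  then show ?thesis using II_first1 by (simp add: ac_simps)
qed

definition "Kc = C0 * (r * T) powr (2 - \<alpha>) * (1 + 2 powr (r * (2 - \<alpha>)) * T powr (\<alpha> - 2)) / (1 - \<alpha>) * T powr \<alpha>"

lemma last_bd:
  assumes l: "2 \<le> l" "l \<le> n"
  shows "\<bar>II l (l - 1)\<bar> \<le> Kc * (NN powr (- gam) * tm l powr (- \<alpha>))"
proof -
  define x where "x = real l / NN"
  have x: "0 < x" "x \<le> 1" using l n_pos unfolding x_def by auto
  have rT: "0 < r * T" using r_ge T_pos by simp
  have ta1: "ta (l - 1) \<le> r * T * x powr (r - 1) / NN"
  proof -
    have "ta (l - 1) \<le> r * T * real l powr (r - 1) / NN powr r"
      using ta_upper[of "l - 1"] l by simp
    also have "r * T * real l powr (r - 1) / NN powr r = r * T * x powr (r - 1) / NN"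
      unfolding x_def using n_pos by (simp add: powr_divide powr_diff field_simps)
    finally show ?thesis .
  qed
  have taP: "ta (l - 1) powr (2 - \<alpha>) \<le> (r * T) powr (2 - \<alpha>) * x powr ((r - 1) * (2 - \<alpha>)) * NN powr (\<alpha> - 2)"
  proof -
    have "ta (l - 1) powr (2 - \<alpha>) \<le> (r * T * x powr (r - 1) / NN) powr (2 - \<alpha>)"
      using ta1 ta_pos[of "l - 1"] a1 by (intro powr_mono2) auto
    also have "\<dots> = (r * T) powr (2 - \<alpha>) * x powr ((r - 1) * (2 - \<alpha>)) * NN powr (\<alpha> - 2)"
    proof -
      have inv: "inverse NN powr (2 - \<alpha>) = NN powr (\<alpha> - 2)"
        using powr_minus[of NN "2 - \<alpha>"] by (simp add: inverse_powr)
      show ?thesis using rT x n_pos inv by (simp add: powr_mult powr_divide powr_powr divide_inverse)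
    qed
    finally show ?thesis .
  qed
  have tlm: "tm (l - 1) powr (\<alpha> - 2) \<le> 2 powr (r * (2 - \<alpha>)) * x powr (r * (\<alpha> - 2)) * T powr (\<alpha> - 2)"
  proof -
    have "real l / 2 \<le> real (l - 1)" using l by auto
    then have "(real l / 2 / NN) powr r * T \<le> tm (l - 1)"
      unfolding tm_x using n_pos T_pos r_ge by (intro mult_right_mono powr_mono2 divide_right_mono) auto
    then have "tm (l - 1) powr (\<alpha> - 2) \<le> ((real l / 2 / NN) powr r * T) powr (\<alpha> - 2)"
      using a1 n_pos T_pos l by (intro powr_mono2') auto
    also have "\<dots> = 2 powr (r * (2 - \<alpha>)) * x powr (r * (\<alpha> - 2)) * T powr (\<alpha> - 2)"
    proof -
      have h1: "real l / 2 / NN = x / 2" unfolding x_def by simp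
      have h2: "((x / 2) powr r * T) powr (\<alpha> - 2) = (x / 2) powr (r * (\<alpha> - 2)) * T powr (\<alpha> - 2)"
        using x T_pos by (simp add: powr_mult powr_powr)
      have h3: "(x / 2) powr (r * (\<alpha> - 2)) = x powr (r * (\<alpha> - 2)) / 2 powr (r * (\<alpha> - 2))"
        using x by (simp add: powr_divide)
      have h4: "(2::real) powr (r * (2 - \<alpha>)) = 2 powr (- (r * (\<alpha> - 2)))" by (simp add: algebra_simps)
      have h5: "(2::real) powr (- (r * (\<alpha> - 2))) = 1 / 2 powr (r * (\<alpha> - 2))" by (rule powr_minus_divide)
      show ?thesis unfolding h1 h2 h3 h4 h5 by simp
    qed
    finally show ?thesis .
  qed
  have x1: "x powr ((r - 1) * (2 - \<alpha>)) \<le> 1" using x r_ge a1 by (intro powr_le1) auto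
  have x2: "1 \<le> x powr (\<alpha> - 2)"
  proof -
    have "x powr 0 \<le> x powr (\<alpha> - 2)" using x a1 by (intro powr_mono') auto
    then show ?thesis using x by simp
  qed
  have e: "x powr ((r - 1) * (2 - \<alpha>)) * x powr (r * (\<alpha> - 2)) = x powr (\<alpha> - 2)"
    using x by (simp add: powr_add[symmetric] algebra_simps)
  define P where "P = (r * T) powr (2 - \<alpha>) * NN powr (\<alpha> - 2)"
  have P0: "0 \<le> P" unfolding P_def by simp
  have "ta (l - 1) powr (2 - \<alpha>) * (1 + tm (l - 1) powr (\<alpha> - 2))
      \<le> (P * x powr ((r - 1) * (2 - \<alpha>))) * (1 + 2 powr (r * (2 - \<alpha>)) * x powr (r * (\<alpha> - 2)) * T powr (\<alpha> - 2))"
    using taP tlm unfolding P_def by (intro mult_mono add_left_mono) (auto simp: ac_simps)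
  also have "\<dots> = P * x powr ((r - 1) * (2 - \<alpha>)) + P * 2 powr (r * (2 - \<alpha>)) * T powr (\<alpha> - 2) * x powr (\<alpha> - 2)"
    using e by (simp add: algebra_simps)
  also have "\<dots> \<le> P * x powr (\<alpha> - 2) + P * 2 powr (r * (2 - \<alpha>)) * T powr (\<alpha> - 2) * x powr (\<alpha> - 2)"
    using x1 x2 P0 by (intro add_right_mono mult_left_mono) auto
  also have "\<dots> = (r * T) powr (2 - \<alpha>) * (1 + 2 powr (r * (2 - \<alpha>)) * T powr (\<alpha> - 2)) * (NN powr (\<alpha> - 2) * x powr (\<alpha> - 2))"
    unfolding P_def by (simp add: algebra_simps)
  also have "\<dots> \<le> (r * T) powr (2 - \<alpha>) * (1 + 2 powr (r * (2 - \<alpha>)) * T powr (\<alpha> - 2)) * (T powr \<alpha> * (NN powr (- gam) * tm l powr (- \<alpha>)))"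
    using KEY[of l] l unfolding x_def by (intro mult_left_mono) auto
  finally have main: "ta (l - 1) powr (2 - \<alpha>) * (1 + tm (l - 1) powr (\<alpha> - 2))
      \<le> (r * T) powr (2 - \<alpha>) * (1 + 2 powr (r * (2 - \<alpha>)) * T powr (\<alpha> - 2)) * (T powr \<alpha> * (NN powr (- gam) * tm l powr (- \<alpha>)))" .
  have "\<bar>II l (l - 1)\<bar> \<le> ta (l - 1) powr (2 - \<alpha>) * (C0 * (1 + tm (l - 1) powr (\<alpha> - 2))) / (1 - \<alpha>)"
    by (rule II_last[OF l])
  also have "\<dots> = C0 / (1 - \<alpha>) * (ta (l - 1) powr (2 - \<alpha>) * (1 + tm (l - 1) powr (\<alpha> - 2)))" by simp
  also have "\<dots> \<le> C0 / (1 - \<alpha>) * ((r * T) powr (2 - \<alpha>) * (1 + 2 powr (r * (2 - \<alpha>)) * T powr (\<alpha> - 2)) * (T powr \<alpha> * (NN powr (- gam) * tm l powr (- \<alpha>))))"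
    using main C0 a1 by (intro mult_left_mono) auto
  also have "\<dots> = Kc * (NN powr (- gam) * tm l powr (- \<alpha>))" unfolding Kc_def by (simp add: field_simps)
  finally show ?thesis .
qed

definition "c2 = C0 * (r * 2 powr (r - 1) * T)^2 * (1 + T powr (\<alpha> - 2))"

lemma c2_nonneg: "0 \<le> c2" unfolding c2_def using C0 by simp

lemma NN_m2: "NN powr (-2) = 1 / NN^2"
  using n_pos by (simp add: powr_minus_divide)

lemma w_bd:
  assumes j: "1 \<le> j" "j < n"
  shows "ta j ^ 2 * (C0 * (1 + tm j powr (\<alpha> - 2))) \<le> c2 * (NN powr (-2) * (real j / NN) powr (r * \<alpha> - 2))"
proof -
  define x where "x = real j / NN"
  have x: "0 < x" "x \<le> 1" using j n_pos unfolding x_def by auto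
  define c1 where "c1 = r * 2 powr (r - 1) * T"
  have c1: "0 < c1" unfolding c1_def using r_ge T_pos by simp
  have ta1: "ta j \<le> c1 * x powr (r - 1) / NN"
  proof -
    have "real (Suc j) powr (r - 1) \<le> (2 * real j) powr (r - 1)"
      using j r_ge by (intro powr_mono2) auto
    also have "\<dots> = 2 powr (r - 1) * real j powr (r - 1)" by (simp add: powr_mult)
    finally have A: "real (Suc j) powr (r - 1) \<le> 2 powr (r - 1) * real j powr (r - 1)" .
    have "ta j \<le> r * T * real (Suc j) powr (r - 1) / NN powr r" by (rule ta_upper)
    also have "\<dots> \<le> r * T * (2 powr (r - 1) * real j powr (r - 1)) / NN powr r"
      using A r_ge T_pos n_pos by (intro divide_right_mono mult_left_mono) auto
    also have "\<dots> = c1 * x powr (r - 1) / NN"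
      unfolding c1_def x_def using n_pos by (simp add: powr_divide powr_diff field_simps)
    finally show ?thesis .
  qed
  have ta2: "ta j ^ 2 \<le> c1^2 * x powr (2 * r - 2) / NN^2"
  proof -
    have "ta j ^ 2 \<le> (c1 * x powr (r - 1) / NN) ^ 2" using ta1 ta_pos[of j] by (intro power_mono) auto
    also have "\<dots> = c1^2 * (x powr (r - 1) * x powr (r - 1)) / NN^2" by (simp add: power2_eq_square)
    also have "x powr (r - 1) * x powr (r - 1) = x powr (2 * r - 2)" using x by (simp add: powr_add[symmetric])
    finally show ?thesis .
  qed
  have tmj: "tm j powr (\<alpha> - 2) = x powr (r * (\<alpha> - 2)) * T powr (\<alpha> - 2)" unfolding tm_powr x_def ..
  have e1: "x powr (2 * r - 2) * x powr (r * (\<alpha> - 2)) = x powr (r * \<alpha> - 2)"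
    using x by (simp add: powr_add[symmetric] algebra_simps)
  have e2: "x powr (2 * r - 2) \<le> x powr (r * \<alpha> - 2)"
    using x a1 r_ge by (intro powr_mono') (auto simp: algebra_simps mult_left_le)
  have "ta j ^ 2 * (C0 * (1 + tm j powr (\<alpha> - 2))) \<le> (c1^2 * x powr (2 * r - 2) / NN^2) * (C0 * (1 + tm j powr (\<alpha> - 2)))"
    using ta2 C0 by (intro mult_right_mono) auto
  also have "\<dots> = C0 * c1^2 / NN^2 * (x powr (2 * r - 2) + T powr (\<alpha> - 2) * x powr (r * \<alpha> - 2))"
    unfolding tmj using e1 by (simp add: algebra_simps add_divide_distrib)
  also have "\<dots> \<le> C0 * c1^2 / NN^2 * (x powr (r * \<alpha> - 2) + T powr (\<alpha> - 2) * x powr (r * \<alpha> - 2))"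
    using e2 C0 by (intro mult_left_mono add_right_mono) auto
  also have "\<dots> = c2 * (NN powr (-2) * x powr (r * \<alpha> - 2))"
    unfolding c2_def c1_def NN_m2 by (simp add: algebra_simps add_divide_distrib)
  finally show ?thesis unfolding x_def .
qed

lemma xe:
  fixes a b e :: real
  assumes "0 < a" "a / 2 \<le> b" "b \<le> a"
  shows "b powr e \<le> 2 powr \<bar>e\<bar> * a powr e"
proof (cases "0 \<le> e")
  case True
  have "b powr e \<le> a powr e" using assms True by (intro powr_mono2) auto
  moreover have "1 \<le> (2::real) powr \<bar>e\<bar>" by (rule ge_one_powr_ge_zero) auto
  ultimately show ?thesis by (metis mult_1 mult_right_mono order_trans powr_ge_zero)
next
  case False
  have "b powr e \<le> (a / 2) powr e" using assms False by (intro powr_mono2') auto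
  also have "\<dots> = 2 powr (- e) * a powr e" using assms by (simp add: powr_divide powr_minus_divide)
  finally show ?thesis using False by simp
qed

definition "Kd = c2 * (4 powr \<alpha> + 2 powr \<bar>r * \<alpha> - 2\<bar>)"

lemma middle_bd:
  assumes l: "2 \<le> l" "l \<le> n"
  shows "(\<Sum>j\<in>{1..<l - 1}. \<bar>II l j\<bar>) \<le> Kd * (NN powr (- gam) * tm l powr (- \<alpha>))"
proof -
  define u where "u j = kk l (tm j)" for j
  define m where "m = (l + 1) div 2"
  define xl where "xl = real l / NN"
  have xl: "0 < xl" "xl \<le> 1" "1 \<le> NN * xl" using l n_pos unfolding xl_def by auto
  have N1: "1 \<le> NN" using n_ge by simp
  have m: "1 \<le> m" "m \<le> l - 1" using l unfolding m_def by auto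
  have tl: "0 < tm l" using tl_pos l by simp
  have D0: "0 \<le> u (Suc j) - u j" if "j < l - 1" for j
    unfolding u_def using that by (intro kk_mono[THEN diff_ge_0_iff_ge[THEN iffD2]] tm_mono tm_less) auto
  have u0: "0 \<le> u j" for j unfolding u_def by (rule kk_nonneg)
  define X where "X = c2 * NN powr (- min (r * \<alpha>) 2)"
  define Yc where "Yc = c2 * 2 powr \<bar>r * \<alpha> - 2\<bar> * (NN powr (-2) * xl powr (r * \<alpha> - 2))"
  have X0: "0 \<le> X" "0 \<le> Yc" unfolding X_def Yc_def using c2_nonneg by auto
  have per: "\<bar>II l j\<bar> \<le> X * (if j < m then u (Suc j) - u j else 0) + Yc * (u (Suc j) - u j)"
    if j: "j \<in> {1..<l - 1}" for j
  proof -
    define xj where "xj = real j / NN"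
    have xj: "0 < xj" "xj \<le> 1" "1 \<le> NN * xj" using j l n_pos unfolding xj_def by auto
    have jn: "1 \<le> j" "j < n" "Suc j < l" using j l by auto
    have wb: "ta j ^ 2 * (C0 * (1 + tm j powr (\<alpha> - 2))) \<le> c2 * (NN powr (-2) * xj powr (r * \<alpha> - 2))"
      unfolding xj_def by (rule w_bd) (use jn in auto)
    have Dj: "0 \<le> u (Suc j) - u j" using D0 j by auto
    have II: "\<bar>II l j\<bar> \<le> ta j ^ 2 * (C0 * (1 + tm j powr (\<alpha> - 2))) * (u (Suc j) - u j)"
      unfolding u_def using II_middle jn l by simp
    show ?thesis
    proof (cases "j < m")
      case True
      have "NN powr (-2) * xj powr (r * \<alpha> - 2) \<le> NN powr (- min (r * \<alpha>) 2)"
        by (rule gl[OF N1 xj])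
      then have "ta j ^ 2 * (C0 * (1 + tm j powr (\<alpha> - 2))) \<le> X"
        unfolding X_def using wb c2_nonneg by (meson mult_left_mono order_trans)
      then have "\<bar>II l j\<bar> \<le> X * (u (Suc j) - u j)"
        using II Dj by (meson mult_right_mono order_trans)
      then show ?thesis using True X0 Dj by (simp add: add_increasing2)
    next
      case False
      then have "real l / 2 \<le> real j" unfolding m_def by auto
      then have "xl / 2 \<le> xj" "xj \<le> xl" using j n_pos unfolding xl_def xj_def by (auto simp: field_simps)
      then have "xj powr (r * \<alpha> - 2) \<le> 2 powr \<bar>r * \<alpha> - 2\<bar> * xl powr (r * \<alpha> - 2)"
        using xe[of xl xj] xl by simp
      then have "c2 * (NN powr (-2) * xj powr (r * \<alpha> - 2)) \<le> Yc"
      proof -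
        assume h: "xj powr (r * \<alpha> - 2) \<le> 2 powr \<bar>r * \<alpha> - 2\<bar> * xl powr (r * \<alpha> - 2)"
        have "c2 * NN powr (-2) * xj powr (r * \<alpha> - 2) \<le> c2 * NN powr (-2) * (2 powr \<bar>r * \<alpha> - 2\<bar> * xl powr (r * \<alpha> - 2))"
          using h c2_nonneg by (intro mult_left_mono) auto
        then show ?thesis unfolding Yc_def by (simp add: ac_simps)
      qed
      then have "\<bar>II l j\<bar> \<le> Yc * (u (Suc j) - u j)"
        using II Dj wb by (meson mult_right_mono order_trans)
      then show ?thesis using False by simp
    qed
  qed
  have "(\<Sum>j\<in>{1..<l - 1}. \<bar>II l j\<bar>)
      \<le> (\<Sum>j\<in>{1..<l - 1}. X * (if j < m then u (Suc j) - u j else 0) + Yc * (u (Suc j) - u j))"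
    using per by (rule sum_mono)
  also have "\<dots> = X * (\<Sum>j\<in>{1..<l - 1}. if j < m then u (Suc j) - u j else 0) + Yc * (\<Sum>j\<in>{1..<l - 1}. u (Suc j) - u j)"
    by (simp add: sum.distrib sum_distrib_left)
  also have "\<dots> \<le> X * u m + Yc * u (l - 1)"
  proof (intro add_mono mult_left_mono X0)
    have "(\<Sum>j\<in>{1..<l - 1}. if j < m then u (Suc j) - u j else 0) \<le> (\<Sum>j\<in>{..<l - 1}. if j < m then u (Suc j) - u j else 0)"
      by (rule sum_mono2) (use D0 in auto)
    also have "\<dots> = (\<Sum>j\<in>{..<l - 1} \<inter> {..<m}. u (Suc j) - u j)"
      by (simp add: sum.inter_restrict)
    also have "{..<l - 1} \<inter> {..<m} = {..<m}" using m by auto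
    also have "(\<Sum>j\<in>{..<m}. u (Suc j) - u j) = u m - u 0" by (rule sum_lessThan_telescope)
    finally show "(\<Sum>j\<in>{1..<l - 1}. if j < m then u (Suc j) - u j else 0) \<le> u m" using u0[of 0] by simp
    have "(\<Sum>j\<in>{1..<l - 1}. u (Suc j) - u j) \<le> (\<Sum>j\<in>{..<l - 1}. u (Suc j) - u j)"
      by (rule sum_mono2) (use D0 in auto)
    also have "\<dots> = u (l - 1) - u 0" by (rule sum_lessThan_telescope)
    finally show "(\<Sum>j\<in>{1..<l - 1}. u (Suc j) - u j) \<le> u (l - 1)" using u0[of 0] by simp
  qed
  also have "X * u m \<le> c2 * 4 powr \<alpha> * (NN powr (- gam) * tm l powr (- \<alpha>))"
  proof -
    have "tm m \<le> 3 / 4 * tm l"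
    proof -
      have ml: "real m / real l \<le> 3 / 4" using l unfolding m_def by (auto simp: field_simps)
      have "tm m = (real m / real l) powr r * tm l"
        unfolding tm_x using n_pos l by (simp add: powr_divide)
      also have "(real m / real l) powr r \<le> (real m / real l) powr 1"
        using r_ge ml by (intro powr_mono') (auto intro: order_trans[OF ml])
      finally show ?thesis using ml tl m by (smt (verit) mult_right_mono powr_one_gt_zero_iff of_nat_0_le_iff divide_nonneg_nonneg)
    qed
    then have "tm l / 4 \<le> tm l - tm m" by simp
    then have "u m \<le> (tm l / 4) powr (- \<alpha>)" unfolding u_def kk_def using tl a0 by (intro powr_mono2') auto
    also have "\<dots> = 4 powr \<alpha> * tm l powr (- \<alpha>)" using tl by (simp add: powr_divide powr_minus_divide field_simps)
    finally have um: "u m \<le> 4 powr \<alpha> * tm l powr (- \<alpha>)" .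
    have "NN powr (- min (r * \<alpha>) 2) \<le> NN powr (- gam)" using N1 a0 by (intro powr_mono) auto
    then show ?thesis unfolding X_def using um c2_nonneg u0[of m]
      by (smt (verit, best) mult.assoc mult.left_commute mult_left_mono mult_mono powr_ge_zero)
  qed
  also have "Yc * u (l - 1) \<le> c2 * 2 powr \<bar>r * \<alpha> - 2\<bar> * (NN powr (- gam) * tm l powr (- \<alpha>))"
  proof -
    have lb: "T * xl powr (r - 1) / NN \<le> ta (l - 1)"
    proof -
      have "T * real l powr (r - 1) / NN powr r \<le> ta (l - 1)" using ta_last_lower l by simp
      moreover have "T * real l powr (r - 1) / NN powr r = T * xl powr (r - 1) / NN"
        unfolding xl_def using n_pos by (simp add: powr_divide powr_diff field_simps)
      ultimately show ?thesis by simp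
    qed
    have pos: "0 < T * xl powr (r - 1) / NN" using T_pos xl n_pos by simp
    have "u (l - 1) = ta (l - 1) powr (- \<alpha>)" unfolding u_def kk_def tau_def using l by simp
    also have "\<dots> \<le> (T * xl powr (r - 1) / NN) powr (- \<alpha>)" using lb pos a0 by (intro powr_mono2') auto
    also have "\<dots> = T powr (- \<alpha>) * xl powr (- ((r - 1) * \<alpha>)) * NN powr \<alpha>"
      using T_pos xl n_pos by (simp add: powr_mult powr_divide powr_powr powr_minus_divide divide_inverse inverse_powr powr_minus)
    finally have ul: "u (l - 1) \<le> T powr (- \<alpha>) * xl powr (- ((r - 1) * \<alpha>)) * NN powr \<alpha>" .
    have e: "NN powr (-2) * xl powr (r * \<alpha> - 2) * (T powr (- \<alpha>) * xl powr (- ((r - 1) * \<alpha>)) * NN powr \<alpha>)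
        = T powr (- \<alpha>) * (NN powr (\<alpha> - 2) * xl powr (\<alpha> - 2))"
    proof -
      have "NN powr (-2) * NN powr \<alpha> = NN powr (\<alpha> - 2)" by (simp add: powr_add[symmetric])
      moreover have "xl powr (r * \<alpha> - 2) * xl powr (- ((r - 1) * \<alpha>)) = xl powr (\<alpha> - 2)"
        using xl by (simp add: powr_add[symmetric] algebra_simps)
      ultimately show ?thesis by (simp add: ac_simps)
    qed
    have "Yc * u (l - 1) \<le> Yc * (T powr (- \<alpha>) * xl powr (- ((r - 1) * \<alpha>)) * NN powr \<alpha>)"
      using ul X0 by (intro mult_left_mono) auto
    also have "\<dots> = c2 * 2 powr \<bar>r * \<alpha> - 2\<bar> * T powr (- \<alpha>) * (NN powr (\<alpha> - 2) * xl powr (\<alpha> - 2))"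
      unfolding Yc_def using e by (simp add: ac_simps) blast
    also have "\<dots> \<le> c2 * 2 powr \<bar>r * \<alpha> - 2\<bar> * T powr (- \<alpha>) * (T powr \<alpha> * (NN powr (- gam) * tm l powr (- \<alpha>)))"
      using KEY[of l] l c2_nonneg unfolding xl_def by (intro mult_left_mono) auto
    also have "\<dots> = c2 * 2 powr \<bar>r * \<alpha> - 2\<bar> * (NN powr (- gam) * tm l powr (- \<alpha>))"
      using T_pos by (simp add: powr_minus field_simps)
    finally show ?thesis .
  qed
  finally show ?thesis unfolding Kd_def by (simp add: algebra_simps)
qed

end

context tfun begin

definition "Kt = B1 * T powr \<alpha> + Kb + Kc + Kd"

lemma consts_nonneg: "0 \<le> B1" "0 \<le> Kb" "0 \<le> Kc" "0 \<le> Kd"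
  unfolding B1_def Kb_def Kc_def Kd_def using C0 a0 a1 T_pos c2_nonneg r_ge
  by (auto intro!: mult_nonneg_nonneg add_nonneg_nonneg divide_nonneg_pos)

lemma sum_II_bound:
  assumes l: "1 \<le> l" "l \<le> n"
  shows "\<bar>\<Sum>j<l. II l j\<bar> \<le> Kt * (NN powr (- gam) * tm l powr (- \<alpha>))"
proof -
  define F where "F = NN powr (- gam) * tm l powr (- \<alpha>)"
  have F0: "0 \<le> F" unfolding F_def by simp
  show ?thesis
  proof (cases "l = 1")
    case True
    then have "\<bar>\<Sum>j<l. II l j\<bar> \<le> B1 * T powr \<alpha> * F" unfolding F_def using first_l1 by simp
    also have "\<dots> \<le> Kt * F" unfolding Kt_def using consts_nonneg F0
      by (intro mult_right_mono) auto
    finally show ?thesis unfolding F_def .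
  next
    case False
    then have l2: "2 \<le> l" using l by simp
    have set: "{..<l} = insert 0 (insert (l - 1) {1..<l - 1})" using l2 by auto
    have "(\<Sum>j<l. II l j) = II l 0 + (II l (l - 1) + (\<Sum>j\<in>{1..<l - 1}. II l j))"
      unfolding set using l2 by (subst sum.insert) auto
    moreover have "\<bar>\<Sum>j\<in>{1..<l - 1}. II l j\<bar> \<le> (\<Sum>j\<in>{1..<l - 1}. \<bar>II l j\<bar>)" by (rule sum_abs)
    ultimately have "\<bar>\<Sum>j<l. II l j\<bar> \<le> \<bar>II l 0\<bar> + \<bar>II l (l - 1)\<bar> + (\<Sum>j\<in>{1..<l - 1}. \<bar>II l j\<bar>)"
      by linarith
    also have "\<dots> \<le> Kb * F + Kc * F + Kd * F"
      using first_l2[OF l2 l(2)] last_bd[OF l2 l(2)] middle_bd[OF l2 l(2)] unfolding F_def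
      by (intro add_mono) auto
    also have "\<dots> \<le> Kt * F"
    proof -
      have "0 \<le> B1 * T powr \<alpha> * F" using consts_nonneg F0 by simp
      then show ?thesis unfolding Kt_def by (simp add: distrib_right)
    qed
    finally show ?thesis unfolding F_def .
  qed
qed

lemma TE_bound:
  assumes l: "1 \<le> l" "l \<le> n"
  shows "\<bar>(\<Sum>j<l. bc \<alpha> l j * (Y (tm (Suc j)) - Y (tm j))) - integral {0..tm l} (\<lambda>s. (tm l - s) powr (- \<alpha>) * Y' s) / Gamma (1 - \<alpha>)\<bar>
     \<le> Kt / Gamma (1 - \<alpha>) * (NN powr (- gam) * tm l powr (- \<alpha>))"
  unfolding decomp[OF l] using sum_II_bound[OF l] G_pos
  by (simp add: divide_right_mono)

end

lemma Kt_explicit: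
  "tfun T r n \<alpha> C0 Y Y' Y'' \<Longrightarrow> tfun.Kt T r \<alpha> C0 =
     C0 * ((2 * T powr (1 - \<alpha>) + 1 / \<alpha> + 2 powr (1 - \<alpha>)) / (1 - \<alpha>) + 2 powr \<alpha> / \<alpha>) * T powr \<alpha>
     + 2 * C0 * 2 powr \<alpha> * (T powr (1 - \<alpha>) + 1 / \<alpha>) * T powr \<alpha>
     + C0 * (r * T) powr (2 - \<alpha>) * (1 + 2 powr (r * (2 - \<alpha>)) * T powr (\<alpha> - 2)) / (1 - \<alpha>) * T powr \<alpha>
     + C0 * (r * 2 powr (r - 1) * T)^2 * (1 + T powr (\<alpha> - 2)) * (4 powr \<alpha> + 2 powr \<bar>r * \<alpha> - 2\<bar>)"
  by (simp add: tfun.Kt_def tfun.B1_def tfun.Kb_def tfun.Kc_def tfun.Kd_def tfun.c2_def)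

locale setting =
  fixes \<alpha> lam v D T L r :: real
    and f :: "real \<Rightarrow> real \<Rightarrow> real" and g :: "real \<Rightarrow> real"
    and y yt ytt y1 y2 y3 y4 :: "real \<Rightarrow> real \<Rightarrow> real"
  assumes a0: "0 < \<alpha>" and a1: "\<alpha> < 1" and lam: "0 \<le> lam" and vpos: "0 < v" and Dpos: "0 < D"
    and Tpos: "0 < T" and Lpos: "0 < L" and rge: "1 \<le> r"
    and f_cont: "continuous_on ({0..L} \<times> {0..T}) (\<lambda>(x, t). f x t)"
    and g_cont: "continuous_on {0..L} g"
    and y_cont: "continuous_on ({0..L} \<times> {0..T}) (\<lambda>(x, t). y x t)"
    and y_t: "\<And>x t. x \<in> {0..L} \<Longrightarrow> t \<in> {0<..T} \<Longrightarrow>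
               ((\<lambda>s. y x s) has_real_derivative yt x t) (at t within {0..T})"
    and y_tt: "\<And>x t. x \<in> {0..L} \<Longrightarrow> t \<in> {0<..T} \<Longrightarrow>
               ((\<lambda>s. yt x s) has_real_derivative ytt x t) (at t within {0..T})"
    and y_x1: "\<And>x t. x \<in> {0..L} \<Longrightarrow> t \<in> {0..T} \<Longrightarrow>
               ((\<lambda>z. y z t) has_real_derivative y1 x t) (at x within {0..L})"
    and y_x2: "\<And>x t. x \<in> {0..L} \<Longrightarrow> t \<in> {0..T} \<Longrightarrow>
               ((\<lambda>z. y1 z t) has_real_derivative y2 x t) (at x within {0..L})"
    and y_x3: "\<And>x t. x \<in> {0..L} \<Longrightarrow> t \<in> {0..T} \<Longrightarrow>
               ((\<lambda>z. y2 z t) has_real_derivative y3 x t) (at x within {0..L})"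
    and y_x4: "\<And>x t. x \<in> {0..L} \<Longrightarrow> t \<in> {0..T} \<Longrightarrow>
               ((\<lambda>z. y3 z t) has_real_derivative y4 x t) (at x within {0..L})"
    and y_x_cont1: "continuous_on ({0..L} \<times> {0..T}) (\<lambda>(x, t). y1 x t)"
    and y_x_cont2: "continuous_on ({0..L} \<times> {0..T}) (\<lambda>(x, t). y2 x t)"
    and y_x_cont3: "continuous_on ({0..L} \<times> {0..T}) (\<lambda>(x, t). y3 x t)"
    and y_x_cont4: "continuous_on ({0..L} \<times> {0..T}) (\<lambda>(x, t). y4 x t)"
    and y_bounds: "\<exists>C>0. \<forall>x\<in>{0..L}. \<forall>t\<in>{0<..T}.
                     \<bar>y x t\<bar> \<le> C * (1 + t powr \<alpha>) \<and>
                     \<bar>yt x t\<bar> \<le> C * (1 + t powr (\<alpha> - 1)) \<and>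
                     \<bar>ytt x t\<bar> \<le> C * (1 + t powr (\<alpha> - 2))"
    and pde_int: "\<And>x t. x \<in> {0<..<L} \<Longrightarrow> t \<in> {0<..T} \<Longrightarrow>
               (\<lambda>s. (t - s) powr (-\<alpha>) * yt x s) integrable_on {0..t}"
    and pde: "\<And>x t. x \<in> {0<..<L} \<Longrightarrow> t \<in> {0<..T} \<Longrightarrow>
               caputo \<alpha> (\<lambda>s. yt x s) t = - v * y1 x t + D * y2 x t + exp (lam * t) * f x t"
    and init: "\<And>x. x \<in> {0..L} \<Longrightarrow> y x 0 = g x"
    and bdry: "\<And>t. t \<in> {0..T} \<Longrightarrow> y 0 t = 0 \<and> y L t = 0"
begin

definition "C0 = (SOME C. C > 0 \<and> (\<forall>x\<in>{0..L}. \<forall>t\<in>{0<..T}.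
                     \<bar>y x t\<bar> \<le> C * (1 + t powr \<alpha>) \<and>
                     \<bar>yt x t\<bar> \<le> C * (1 + t powr (\<alpha> - 1)) \<and>
                     \<bar>ytt x t\<bar> \<le> C * (1 + t powr (\<alpha> - 2))))"

lemma C0: "C0 > 0" "\<And>x t. x \<in> {0..L} \<Longrightarrow> t \<in> {0<..T} \<Longrightarrow> \<bar>yt x t\<bar> \<le> C0 * (1 + t powr (\<alpha> - 1))"
     "\<And>x t. x \<in> {0..L} \<Longrightarrow> t \<in> {0<..T} \<Longrightarrow> \<bar>ytt x t\<bar> \<le> C0 * (1 + t powr (\<alpha> - 2))"
  using someI_ex[OF y_bounds] unfolding C0_def[symmetric] by auto

lemma cont_bound:
  fixes F :: "real \<Rightarrow> real \<Rightarrow> real"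
  assumes "continuous_on ({0..L} \<times> {0..T}) (\<lambda>(x, t). F x t)"
  shows "\<exists>M. \<forall>x\<in>{0..L}. \<forall>t\<in>{0..T}. \<bar>F x t\<bar> \<le> M"
proof -
  have "compact ((\<lambda>(x, t). F x t) ` ({0..L} \<times> {0..T}))"
    by (rule compact_continuous_image[OF assms]) (auto intro: compact_Times)
  then have "bounded ((\<lambda>(x, t). F x t) ` ({0..L} \<times> {0..T}))" by (rule compact_imp_bounded)
  then obtain M where "\<forall>z\<in>(\<lambda>(x, t). F x t) ` ({0..L} \<times> {0..T}). \<bar>z\<bar> \<le> M"
    unfolding bounded_real by blast
  then show ?thesis by auto
qed

definition "M3 = (SOME M. \<forall>x\<in>{0..L}. \<forall>t\<in>{0..T}. \<bar>y3 x t\<bar> \<le> M)"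
definition "M4 = (SOME M. \<forall>x\<in>{0..L}. \<forall>t\<in>{0..T}. \<bar>y4 x t\<bar> \<le> M)"

lemma M3: "\<And>x t. x \<in> {0..L} \<Longrightarrow> t \<in> {0..T} \<Longrightarrow> \<bar>y3 x t\<bar> \<le> M3"
  using someI_ex[OF cont_bound[OF y_x_cont3]] unfolding M3_def[symmetric] by auto
lemma M4: "\<And>x t. x \<in> {0..L} \<Longrightarrow> t \<in> {0..T} \<Longrightarrow> \<bar>y4 x t\<bar> \<le> M4"
  using someI_ex[OF cont_bound[OF y_x_cont4]] unfolding M4_def[symmetric] by auto
lemma M34: "0 \<le> M3" "0 \<le> M4"
  using M3[of 0 0] M4[of 0 0] Lpos Tpos by auto

lemma tfun_inst:
  assumes x: "x \<in> {0<..<L}" and n: "1 \<le> n"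
  shows "tfun T r n \<alpha> C0 (y x) (yt x) (ytt x)"
proof
  show "0 < T" "1 \<le> r" "1 \<le> n" "0 < \<alpha>" "\<alpha> < 1" "0 < C0" using Tpos rge n a0 a1 C0 by auto
  have xl: "x \<in> {0..L}" using x by auto
  have "continuous_on {0..T} (\<lambda>t. (\<lambda>(x, t). y x t) (x, t))"
    by (rule continuous_on_compose2[OF y_cont]) (use xl in \<open>auto intro!: continuous_intros\<close>)
  then show "continuous_on {0..T} (y x)" by simp
  fix s assume s: "s \<in> {0<..T}"
  show "(y x has_real_derivative yt x s) (at s within {0..T})" using y_t[OF xl s] by simp
  show "(yt x has_real_derivative ytt x s) (at s within {0..T})" using y_tt[OF xl s] by simp
  show "\<bar>yt x s\<bar> \<le> C0 * (1 + s powr (\<alpha> - 1))" using C0(2)[OF xl s] .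
  show "\<bar>ytt x s\<bar> \<le> C0 * (1 + s powr (\<alpha> - 2))" using C0(3)[OF xl s] .
next
  fix t assume t: "t \<in> {0<..T}"
  show "(\<lambda>s. (t - s) powr (- \<alpha>) * yt x s) integrable_on {0..t}" using pde_int[OF x t] .
qed

lemma spatial1:
  assumes t: "t \<in> {0..T}" and xs: "0 \<le> x - h" "x + h \<le> L" "0 < h"
  shows "\<bar>(y (x + h) t - y (x - h) t) / (2 * h) - y1 x t\<bar> \<le> M3 * h^2"
proof -
  have d1: "\<And>z. z \<in> {0..L} \<Longrightarrow> ((\<lambda>z. y z t) has_real_derivative y1 z t) (at z within {0..L})" using y_x1 t by auto
  have d2: "\<And>z. z \<in> {0..L} \<Longrightarrow> ((\<lambda>z. y1 z t) has_real_derivative y2 z t) (at z within {0..L})" using y_x2 t by auto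
  have d3: "\<And>z. z \<in> {0..L} \<Longrightarrow> ((\<lambda>z. y2 z t) has_real_derivative y3 z t) (at z within {0..L})" using y_x3 t by auto
  have mb: "\<And>z. z \<in> {0..L} \<Longrightarrow> \<bar>y3 z t\<bar> \<le> M3" using M3 t by auto
  from central1[OF d1 d2 d3 mb xs] show ?thesis .
qed

lemma spatial2:
  assumes t: "t \<in> {0..T}" and xs: "0 \<le> x - h" "x + h \<le> L" "0 < h"
  shows "\<bar>(y (x + h) t - 2 * y x t + y (x - h) t) / h^2 - y2 x t\<bar> \<le> 2 * M4 * h^2"
proof -
  have d1: "\<And>z. z \<in> {0..L} \<Longrightarrow> ((\<lambda>z. y z t) has_real_derivative y1 z t) (at z within {0..L})" using y_x1 t by auto
  have d2: "\<And>z. z \<in> {0..L} \<Longrightarrow> ((\<lambda>z. y1 z t) has_real_derivative y2 z t) (at z within {0..L})" using y_x2 t by auto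
  have d3: "\<And>z. z \<in> {0..L} \<Longrightarrow> ((\<lambda>z. y2 z t) has_real_derivative y3 z t) (at z within {0..L})" using y_x3 t by auto
  have d4: "\<And>z. z \<in> {0..L} \<Longrightarrow> ((\<lambda>z. y3 z t) has_real_derivative y4 z t) (at z within {0..L})" using y_x4 t by auto
  have mb: "\<And>z. z \<in> {0..L} \<Longrightarrow> \<bar>y4 z t\<bar> \<le> M4" using M4 t by auto
  from central2[OF d1 d2 d3 d4 mb xs] show ?thesis .
qed

end

lemma alg_lemma:
  fixes TE v D a1 a2 F Yp Ym Y0 yp ym y0 q p :: real
  shows "(TE + (- v * a1 + D * a2 + F) - (- v * (Yp - Ym) / q + D * (Yp - 2 * Y0 + Ym) / p + F))
     - (- v * ((yp - Yp) - (ym - Ym)) / q + D * ((yp - Yp) - 2 * (y0 - Y0) + (ym - Ym)) / p)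
   = TE - v * (a1 - (yp - ym) / q) + D * (a2 - (yp - 2 * y0 + ym) / p)"
  by (simp add: diff_divide_distrib add_divide_distrib algebra_simps)

context setting begin

lemma resid_bound:
  assumes n: "1 \<le> n" and K: "2 \<le> K"
    and sch: "is_scheme_solution \<alpha> lam v D T L r f g n K Y"
    and i: "i \<in> {1..K-1}" and l: "l \<in> {1..n}"
  defines "h \<equiv> L / real K"
  defines "e \<equiv> \<lambda>i l. y (real i * h) (tmesh T r n l) - Y i l"
  shows "\<bar>(\<Sum>j<l. mesh.bc T r n \<alpha> l j * (e i (Suc j) - e i j))
          - (- v * (e (i+1) l - e (i-1) l) / (2*h) + D * (e (i+1) l - 2 * e i l + e (i-1) l) / h^2)\<bar>
         \<le> \<bar>tfun.Kt T r \<alpha> C0\<bar> / Gamma (1 - \<alpha>) * (real n powr (- min (2 - \<alpha>) (r * \<alpha>)) * tmesh T r n l powr (- \<alpha>))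
           + (v * M3 + 2 * D * M4) * h^2"
proof -
  interpret mesh T r n using Tpos rge n by unfold_locales
  have hpos: "0 < h" unfolding h_def using Lpos K by simp
  define x where "x = real i * h"
  have Kh: "real K * h = L" unfolding h_def using K by simp
  have x: "0 < x" "x < L" "0 \<le> x - h" "x + h \<le> L"
  proof -
    have "1 \<le> real i" "real i + 1 \<le> real K" using i K by auto
    then have a: "(real i + 1) * h \<le> real K * h" using hpos by (intro mult_right_mono) auto
    have b: "1 * h \<le> real i * h" using hpos \<open>1 \<le> real i\<close> by (intro mult_right_mono) auto
    show "0 < x" unfolding x_def using hpos \<open>1 \<le> real i\<close> by simp
    show "x < L" "0 \<le> x - h" "x + h \<le> L" unfolding x_def using a b Kh hpos by (auto simp: algebra_simps)

  qed
  have xp: "real (i + 1) * h = x + h" "real (i - 1) * h = x - h"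
    unfolding x_def using i by (auto simp: algebra_simps of_nat_diff)
  define t where "t = tm l"
  have t: "0 < t" "t \<le> T" unfolding t_def using tm_pos tm_le_T l by auto
  have xin: "x \<in> {0<..<L}" using x by auto
  interpret tf: tfun T r n \<alpha> C0 "y x" "yt x" "ytt x" by (rule tfun_inst[OF xin n])
  define TE where "TE = (\<Sum>j<l. bc \<alpha> l j * (y x (tm (Suc j)) - y x (tm j))) - integral {0..t} (\<lambda>s. (t - s) powr (- \<alpha>) * yt x s) / Gamma (1 - \<alpha>)"
  have TEb: "\<bar>TE\<bar> \<le> \<bar>tfun.Kt T r \<alpha> C0\<bar> / Gamma (1 - \<alpha>) * (real n powr (- min (2 - \<alpha>) (r * \<alpha>)) * t powr (- \<alpha>))"
  proof -
    have "\<bar>TE\<bar> \<le> tfun.Kt T r \<alpha> C0 / Gamma (1 - \<alpha>) * (real n powr (- min (2 - \<alpha>) (r * \<alpha>)) * t powr (- \<alpha>))"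
      unfolding TE_def t_def using tf.TE_bound l by auto
    also have "\<dots> \<le> \<bar>tfun.Kt T r \<alpha> C0\<bar> / Gamma (1 - \<alpha>) * (real n powr (- min (2 - \<alpha>) (r * \<alpha>)) * t powr (- \<alpha>))"
      using tf.G_pos by (intro mult_right_mono divide_right_mono) auto
    finally show ?thesis .
  qed
  have cap: "integral {0..t} (\<lambda>s. (t - s) powr (- \<alpha>) * yt x s) / Gamma (1 - \<alpha>) = - v * y1 x t + D * y2 x t + exp (lam * t) * f x t"
    using pde[OF xin, of t] t unfolding caputo_def by simp
  have schEq: "(1 / Gamma (2 - \<alpha>)) * (\<Sum>j<l. tau T r n j powr (-\<alpha>) * acoef \<alpha> r j l * (Y i (Suc j) - Y i j))
          = - v * (Y (i+1) l - Y (i-1) l) / (2 * h)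
            + D * (Y (i+1) l - 2 * Y i l + Y (i-1) l) / h^2
            + exp (lam * t) * f x t"
    using sch i l unfolding is_scheme_solution_def Let_def h_def[symmetric] x_def t_def by auto
  have sumY: "(1 / Gamma (2 - \<alpha>)) * (\<Sum>j<l. tau T r n j powr (-\<alpha>) * acoef \<alpha> r j l * (Y i (Suc j) - Y i j))
      = (\<Sum>j<l. bc \<alpha> l j * (Y i (Suc j) - Y i j))"
    unfolding sum_distrib_left
  proof (rule sum.cong)
    fix j assume "j \<in> {..<l}"
    then have be: "ta j powr (-\<alpha>) * acoef \<alpha> r j l / Gamma (2 - \<alpha>) = bc \<alpha> l j" by (intro bc_eq a1) auto
    have "1 / Gamma (2 - \<alpha>) * (ta j powr (-\<alpha>) * acoef \<alpha> r j l * (Y i (Suc j) - Y i j))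
        = (ta j powr (-\<alpha>) * acoef \<alpha> r j l / Gamma (2 - \<alpha>)) * (Y i (Suc j) - Y i j)" by simp
    then show "1 / Gamma (2 - \<alpha>) * (ta j powr (-\<alpha>) * acoef \<alpha> r j l * (Y i (Suc j) - Y i j)) = bc \<alpha> l j * (Y i (Suc j) - Y i j)"
      by (simp only: be)
  qed simp
  define Sy where "Sy = (\<Sum>j<l. bc \<alpha> l j * (y x (tm (Suc j)) - y x (tm j)))"
  define SY where "SY = (\<Sum>j<l. bc \<alpha> l j * (Y i (Suc j) - Y i j))"
  have Se: "(\<Sum>j<l. bc \<alpha> l j * (e i (Suc j) - e i j)) = Sy - SY"
    unfolding Sy_def SY_def e_def x_def by (simp add: sum_subtractf[symmetric] algebra_simps)
  define yp ym y0 where "yp = y (x + h) t" and "ym = y (x - h) t" and "y0 = y x t"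
  define Yp Ym Y0 where "Yp = Y (i+1) l" and "Ym = Y (i-1) l" and "Y0 = Y i l"
  have ee: "e (i+1) l = yp - Yp" "e (i-1) l = ym - Ym" "e i l = y0 - Y0"
    unfolding e_def yp_def ym_def y0_def Yp_def Ym_def Y0_def xp t_def x_def by auto
  have SY': "SY = - v * (Yp - Ym) / (2 * h) + D * (Yp - 2 * Y0 + Ym) / h^2 + exp (lam * t) * f x t"
    using schEq sumY unfolding SY_def Yp_def Ym_def Y0_def by simp
  have Sy': "Sy = TE + (- v * y1 x t + D * y2 x t + exp (lam * t) * f x t)"
    unfolding TE_def Sy_def cap[symmetric] by simp
  have s1: "\<bar>(yp - ym) / (2 * h) - y1 x t\<bar> \<le> M3 * h^2"
    unfolding yp_def ym_def using spatial1[of t x h] t x hpos by auto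
  have s2: "\<bar>(yp - 2 * y0 + ym) / h^2 - y2 x t\<bar> \<le> 2 * M4 * h^2"
    unfolding yp_def ym_def y0_def using spatial2[of t x h] t x hpos by auto
  have alg: "(Sy - SY) - (- v * ((yp - Yp) - (ym - Ym)) / (2*h) + D * ((yp - Yp) - 2 * (y0 - Y0) + (ym - Ym)) / h^2)
      = TE - v * (y1 x t - (yp - ym) / (2 * h)) + D * (y2 x t - (yp - 2 * y0 + ym) / h^2)"
    unfolding Sy' SY' by (rule alg_lemma)
  have "\<bar>TE - v * (y1 x t - (yp - ym) / (2 * h)) + D * (y2 x t - (yp - 2 * y0 + ym) / h^2)\<bar>
      \<le> \<bar>TE\<bar> + v * \<bar>(yp - ym) / (2 * h) - y1 x t\<bar> + D * \<bar>(yp - 2 * y0 + ym) / h^2 - y2 x t\<bar>"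
  proof -
    define B where "B = y1 x t - (yp - ym) / (2 * h)"
    define C where "C = y2 x t - (yp - 2 * y0 + ym) / h^2"
    have "\<bar>TE - v * B + D * C\<bar> \<le> \<bar>TE - v * B\<bar> + \<bar>D * C\<bar>" by (rule abs_triangle_ineq)
    also have "\<bar>TE - v * B\<bar> \<le> \<bar>TE\<bar> + \<bar>v * B\<bar>" by (rule abs_triangle_ineq4)
    also have "\<bar>v * B\<bar> = v * \<bar>(yp - ym) / (2 * h) - y1 x t\<bar>" unfolding B_def using vpos by (simp add: abs_mult abs_minus_commute)
    also have "\<bar>D * C\<bar> = D * \<bar>(yp - 2 * y0 + ym) / h^2 - y2 x t\<bar>" unfolding C_def using Dpos by (simp add: abs_mult abs_minus_commute)
    finally show ?thesis unfolding B_def C_def by simp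
  qed
  also have "\<dots> \<le> \<bar>TE\<bar> + v * (M3 * h^2) + D * (2 * M4 * h^2)"
    using s1 s2 vpos Dpos by (intro add_mono mult_left_mono) auto
  finally show ?thesis
    unfolding Se ee alg using TEb t_def by (simp add: algebra_simps)
qed

end

lemma L2_le_card:
  fixes f :: "nat \<Rightarrow> real"
  assumes "finite A" "0 \<le> B" "\<And>i. i \<in> A \<Longrightarrow> \<bar>f i\<bar> \<le> B"
  shows "L2_set f A \<le> sqrt (real (card A)) * B"
proof -
  have "(\<Sum>i\<in>A. (f i)^2) \<le> (\<Sum>i\<in>A. B^2)"
  proof (rule sum_mono)
    fix i assume "i \<in> A"
    then have "\<bar>f i\<bar>^2 \<le> B^2" using assms by (intro power_mono) auto
    then show "(f i)^2 \<le> B^2" by simp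
  qed
  then have "L2_set f A \<le> sqrt (real (card A) * B^2)" unfolding L2_set_def by simp
  also have "\<dots> = sqrt (real (card A)) * B" using assms by (simp add: real_sqrt_mult)
  finally show ?thesis .
qed

lemma Max_le_L2:
  fixes e :: "nat \<Rightarrow> real"
  assumes "finite A" "A \<noteq> {}"
  shows "Max ((\<lambda>i. \<bar>e i\<bar>) ` A) \<le> L2_set e A"
proof -
  have "L2_set (\<lambda>i. \<bar>e i\<bar>) A = L2_set e A" unfolding L2_set_def by simp
  then have "\<bar>e i\<bar> \<le> L2_set e A" if "i \<in> A" for i
    using member_le_L2_set[OF assms(1) that, of "\<lambda>i. \<bar>e i\<bar>"] by simp
  then show ?thesis using assms by simp
qed

lemma cw_arith: "0 \<le> P \<Longrightarrow> (a::real) * (b * P) \<le> (a * b + 1) * P"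
  by (simp add: algebra_simps)

context setting begin

definition "Cfin = (1 + sqrt (L * v / (2 * D))) * (\<bar>tfun.Kt T r \<alpha> C0\<bar> + Gamma (1 - \<alpha>) * T powr \<alpha> * (v * M3 + 2 * D * M4)) + 1"

lemma Cfin_arith:
  assumes "0 \<le> Np + h^2" and that: "G = Gamma (1 - \<alpha>)" "cs = v * M3 + 2 * D * M4"
  shows "(1 + sqrt (L * v / (2 * D))) * ((\<bar>tfun.Kt T r \<alpha> C0\<bar> + G * T powr \<alpha> * cs) * (Np + h^2)) \<le> Cfin * (Np + h^2)"
  unfolding Cfin_def that by (rule cw_arith) (use assms(1) in simp)

lemma final:
  assumes n: "1 \<le> n" and K: "2 \<le> K"
    and sch: "is_scheme_solution \<alpha> lam v D T L r f g n K Y"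
    and l: "l \<in> {1..n}"
  shows "Max ((\<lambda>i. \<bar>y (real i * (L / real K)) (tmesh T r n l) - Y i l\<bar>) ` {1..K-1})
         \<le> Cfin * (real n powr (- min (2 - \<alpha>) (r * \<alpha>)) + (L / real K)^2)"
proof -
  interpret mesh T r n using Tpos rge n by unfold_locales
  define h where "h = L / real K"
  define e where "e = (\<lambda>i l. y (real i * h) (tmesh T r n l) - Y i l)"
  define \<rho> where "\<rho> = (\<lambda>i l. (\<Sum>j<l. bc \<alpha> l j * (e i (Suc j) - e i j))
          - (- v * (e (i+1) l - e (i-1) l) / (2*h) + D * (e (i+1) l - 2 * e i l + e (i-1) l) / h^2))"
  define G where "G = Gamma (1 - \<alpha>)"
  have G: "0 < G" unfolding G_def using a1 by simp
  define Np where "Np = real n powr (- min (2 - \<alpha>) (r * \<alpha>))"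
  have Np: "0 \<le> Np" unfolding Np_def by simp
  define cs where "cs = v * M3 + 2 * D * M4"
  have cs: "0 \<le> cs" unfolding cs_def using vpos Dpos M34 by simp
  define W where "W = \<bar>tfun.Kt T r \<alpha> C0\<bar> * Np + G * T powr \<alpha> * cs * h^2"
  have W0: "0 \<le> W" unfolding W_def using Np G cs Tpos by simp
  have hpos: "0 < h" unfolding h_def using Lpos K by simp
  have Kh: "real K * h = L" unfolding h_def using K by simp
  have S: "finite {1..K-1}" "{1..K-1} \<noteq> {}" using K by auto
  have mono: "\<And>l j. 1 \<le> l \<Longrightarrow> l \<le> n \<Longrightarrow> Suc j < l \<Longrightarrow> bc \<alpha> l j \<le> bc \<alpha> l (Suc j)"
    using bc_mono a0 a1 by auto
  have pos: "\<And>l. 1 \<le> l \<Longrightarrow> l \<le> n \<Longrightarrow> 0 < bc \<alpha> l (l - 1)"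
    using bc_pos a0 a1 by auto
  have b0: "0 \<le> bc \<alpha> l 0" if "1 \<le> l" "l \<le> n" for l using bc_pos[OF a0 a1, of 0 l] that by simp
  have Rb: "\<bar>\<rho> i l\<bar> \<le> bc \<alpha> l 0 * W" if i: "i \<in> {1..K-1}" and l: "l \<in> {1..n}" for i l
  proof -
    have "\<bar>\<rho> i l\<bar> \<le> \<bar>tfun.Kt T r \<alpha> C0\<bar> / G * (Np * tm l powr (- \<alpha>)) + cs * h^2"
      using resid_bound[OF n K sch i l] unfolding \<rho>_def e_def h_def G_def Np_def cs_def by simp
    also have "\<dots> \<le> bc \<alpha> l 0 * W"
    proof -
      have l1: "tm l powr (- \<alpha>) / G \<le> bc \<alpha> l 0" using bc_lower[OF a0 a1, of 0 l] l unfolding G_def by simp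
      have l2: "T powr (- \<alpha>) / G \<le> bc \<alpha> l 0" using bc0_lower[OF a0 a1, of l] l unfolding G_def by simp
      have "\<bar>tfun.Kt T r \<alpha> C0\<bar> / G * (Np * tm l powr (- \<alpha>)) = (\<bar>tfun.Kt T r \<alpha> C0\<bar> * Np) * (tm l powr (- \<alpha>) / G)"
        by simp
      also have "\<dots> \<le> (\<bar>tfun.Kt T r \<alpha> C0\<bar> * Np) * bc \<alpha> l 0" using l1 Np by (intro mult_left_mono) auto
      finally have A: "\<bar>tfun.Kt T r \<alpha> C0\<bar> / G * (Np * tm l powr (- \<alpha>)) \<le> (\<bar>tfun.Kt T r \<alpha> C0\<bar> * Np) * bc \<alpha> l 0" .
      have "cs * h^2 = (G * T powr \<alpha> * cs * h^2) * (T powr (- \<alpha>) / G)"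
        using G Tpos by (simp add: powr_minus field_simps)
      also have "\<dots> \<le> (G * T powr \<alpha> * cs * h^2) * bc \<alpha> l 0"
        using l2 G cs by (intro mult_left_mono) auto
      finally have B: "cs * h^2 \<le> (G * T powr \<alpha> * cs * h^2) * bc \<alpha> l 0" .
      show ?thesis using A B unfolding W_def by (simp add: algebra_simps)
    qed
    finally show ?thesis .
  qed
  have e0: "\<And>i. i \<le> K \<Longrightarrow> e i 0 = 0"
  proof -
    fix i assume i: "i \<le> K"
    have "real i * h \<le> real K * h" using i hpos by (intro mult_right_mono) auto
    then have "real i * h \<in> {0..L}" using Kh hpos by auto
    moreover have "Y i 0 = g (real i * h)" using sch i unfolding is_scheme_solution_def Let_def h_def by auto
    ultimately show "e i 0 = 0" unfolding e_def using init by simp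
  qed
  have bd: "e 0 l = 0" "e K l = 0" if l: "l \<in> {1..n}" for l
  proof -
    have t: "tm l \<in> {0..T}" using tm_nonneg tm_le_T l by auto
    have "Y 0 l = 0" "Y K l = 0" using sch l unfolding is_scheme_solution_def Let_def by auto
    then show "e 0 l = 0" "e K l = 0" unfolding e_def using bdry[OF t] Kh by auto
  qed
  have eq: "\<And>i. i \<in> {1..K-1} \<Longrightarrow> (\<Sum>j<l. bc \<alpha> l j * (e i (Suc j) - e i j))
        = - v * (e (i+1) l - e (i-1) l) / (2*h) + D * (e (i+1) l - 2 * e i l + e (i-1) l) / h^2 + \<rho> i l" for l
    unfolding \<rho>_def by simp
  define Em where "Em = (\<lambda>l. Max ((\<lambda>i. \<bar>e i l\<bar>) ` {1..K-1}))"
  have Wb: "W \<le> (\<bar>tfun.Kt T r \<alpha> C0\<bar> + G * T powr \<alpha> * cs) * (Np + h^2)"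
    unfolding W_def using Np G cs Tpos by (simp add: algebra_simps)
  have CW: "(1 + sqrt (L * v / (2 * D))) * W \<le> Cfin * (Np + h^2)"
  proof -
    have "(1 + sqrt (L * v / (2 * D))) * W \<le> (1 + sqrt (L * v / (2 * D))) * ((\<bar>tfun.Kt T r \<alpha> C0\<bar> + G * T powr \<alpha> * cs) * (Np + h^2))"
      using Wb Lpos vpos Dpos by (intro mult_left_mono) auto
    also have "\<dots> \<le> Cfin * (Np + h^2)"
      by (rule Cfin_arith) (use Np G_def cs_def in auto)
    finally show ?thesis .
  qed
  have "Em l \<le> (1 + sqrt (L * v / (2 * D))) * W"
  proof (cases "v * h \<le> 2 * D")
    case True
    have ineq: "bc \<alpha> l (l - 1) * Em l \<le> (\<Sum>j\<in>{1..<l}. (bc \<alpha> l j - bc \<alpha> l (j - 1)) * Em j) + Max ((\<lambda>i. \<bar>\<rho> i l\<bar>) ` {1..K-1})"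
      if l: "1 \<le> l" "l \<le> n" for l
    proof -
      have m1: "\<And>j. Suc j < l \<Longrightarrow> bc \<alpha> l j \<le> bc \<alpha> l (Suc j)" using mono l by blast
      have lin: "l \<in> {1..n}" using l by simp
      show ?thesis unfolding Em_def
        by (rule max_stab[where b = "bc \<alpha>" and e = e and \<rho> = \<rho>, OF K hpos Dpos vpos True l(1) m1 e0 bd[OF lin] eq])
    qed
    have Pb: "Max ((\<lambda>i. \<bar>\<rho> i l\<bar>) ` {1..K-1}) \<le> bc \<alpha> l 0 * W" if l: "1 \<le> l" "l \<le> n" for l
      using Rb l S by simp
    have "Em l \<le> W"
      by (rule discrete_comparison[where b = "bc \<alpha>" and P = "\<lambda>l. Max ((\<lambda>i. \<bar>\<rho> i l\<bar>) ` {1..K-1})", OF mono pos ineq Pb])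
         (use l in auto)
    moreover have "W \<le> (1 + sqrt (L * v / (2 * D))) * W"
    proof -
      have "0 \<le> sqrt (L * v / (2 * D)) * W" using W0 Lpos vpos Dpos by simp
      then show ?thesis by (simp add: distrib_right)
    qed
    ultimately show ?thesis by linarith
  next
    case False
    define Nl where "Nl = (\<lambda>l. L2_set (\<lambda>i. e i l) {1..K-1})"
    have ineq: "bc \<alpha> l (l - 1) * Nl l \<le> (\<Sum>j\<in>{1..<l}. (bc \<alpha> l j - bc \<alpha> l (j - 1)) * Nl j) + L2_set (\<lambda>i. \<rho> i l) {1..K-1}"
      if l: "1 \<le> l" "l \<le> n" for l
    proof -
      have m1: "\<And>j. Suc j < l \<Longrightarrow> bc \<alpha> l j \<le> bc \<alpha> l (Suc j)" using mono l by blast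
      have lin: "l \<in> {1..n}" using l by simp
      show ?thesis unfolding Nl_def
        by (rule eucl_stab[where b = "bc \<alpha>" and e = e and \<rho> = \<rho>, OF K hpos Dpos l(1) m1 e0 bd[OF lin] eq])
    qed
    have Kc: "real K \<le> L * v / (2 * D)"
    proof -
      have "2 * D < v * h" using False by simp
      then have "real K * (2 * D) \<le> real K * (v * h)" using K by (intro mult_left_mono) auto
      also have "\<dots> = L * v" using Kh by (simp add: algebra_simps)
      finally show ?thesis using Dpos by (simp add: field_simps)
    qed
    have cardS: "real (card {1..K-1}) \<le> real K" by simp
    have sq: "sqrt (real (card {1..K-1})) \<le> sqrt (L * v / (2 * D))"
      using cardS Kc by (intro real_sqrt_le_mono) linarith
    define W' where "W' = sqrt (L * v / (2 * D)) * W"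
    have Pb: "L2_set (\<lambda>i. \<rho> i l) {1..K-1} \<le> bc \<alpha> l 0 * W'" if l: "1 \<le> l" "l \<le> n" for l
    proof -
      have "L2_set (\<lambda>i. \<rho> i l) {1..K-1} \<le> sqrt (real (card {1..K-1})) * (bc \<alpha> l 0 * W)"
        by (rule L2_le_card) (use S b0[OF l] W0 Rb l in auto)
      also have "\<dots> \<le> sqrt (L * v / (2 * D)) * (bc \<alpha> l 0 * W)"
        using sq b0[OF l] W0 by (intro mult_right_mono) auto
      finally show ?thesis unfolding W'_def by (simp add: ac_simps)
    qed
    have "Nl l \<le> W'"
      by (rule discrete_comparison[where b = "bc \<alpha>" and P = "\<lambda>l. L2_set (\<lambda>i. \<rho> i l) {1..K-1}", OF mono pos ineq Pb])
         (use l in auto)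
    moreover have "Em l \<le> Nl l" unfolding Em_def Nl_def by (rule Max_le_L2[OF S])
    moreover have "W' \<le> (1 + sqrt (L * v / (2 * D))) * W" unfolding W'_def using W0 by (simp add: distrib_right)
    ultimately show ?thesis by linarith
  qed
  with CW show ?thesis unfolding Em_def e_def h_def Np_def by simp
qed

end

theorem mainTheorem2:
  fixes \<alpha> lam v D T L r :: real
    and f :: "real \<Rightarrow> real \<Rightarrow> real" and g :: "real \<Rightarrow> real"
    and y yt ytt y1 y2 y3 y4 :: "real \<Rightarrow> real \<Rightarrow> real"
  assumes "0 < \<alpha>" "\<alpha> < 1" "0 \<le> lam" "0 < v" "0 < D" "0 < T" "0 < L" "1 \<le> r"
    and f_cont: "continuous_on ({0..L} \<times> {0..T}) (\<lambda>(x, t). f x t)"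
    and g_cont: "continuous_on {0..L} g"
    and y_cont: "continuous_on ({0..L} \<times> {0..T}) (\<lambda>(x, t). y x t)"
    \<comment> \<open>time derivatives on (0,T]\<close>
    and y_t: "\<And>x t. x \<in> {0..L} \<Longrightarrow> t \<in> {0<..T} \<Longrightarrow>
               ((\<lambda>s. y x s) has_real_derivative yt x t) (at t within {0..T})"
    and y_tt: "\<And>x t. x \<in> {0..L} \<Longrightarrow> t \<in> {0<..T} \<Longrightarrow>
               ((\<lambda>s. yt x s) has_real_derivative ytt x t) (at t within {0..T})"
    \<comment> \<open>continuous partial derivatives up to fourth order in x\<close>
    and y_x1: "\<And>x t. x \<in> {0..L} \<Longrightarrow> t \<in> {0..T} \<Longrightarrow>
               ((\<lambda>z. y z t) has_real_derivative y1 x t) (at x within {0..L})"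
    and y_x2: "\<And>x t. x \<in> {0..L} \<Longrightarrow> t \<in> {0..T} \<Longrightarrow>
               ((\<lambda>z. y1 z t) has_real_derivative y2 x t) (at x within {0..L})"
    and y_x3: "\<And>x t. x \<in> {0..L} \<Longrightarrow> t \<in> {0..T} \<Longrightarrow>
               ((\<lambda>z. y2 z t) has_real_derivative y3 x t) (at x within {0..L})"
    and y_x4: "\<And>x t. x \<in> {0..L} \<Longrightarrow> t \<in> {0..T} \<Longrightarrow>
               ((\<lambda>z. y3 z t) has_real_derivative y4 x t) (at x within {0..L})"
    and y_x_cont: "continuous_on ({0..L} \<times> {0..T}) (\<lambda>(x, t). y1 x t)"
                  "continuous_on ({0..L} \<times> {0..T}) (\<lambda>(x, t). y2 x t)"
                  "continuous_on ({0..L} \<times> {0..T}) (\<lambda>(x, t). y3 x t)"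
                  "continuous_on ({0..L} \<times> {0..T}) (\<lambda>(x, t). y4 x t)"
    \<comment> \<open>regularity bounds in t\<close>
    and y_bounds: "\<exists>C>0. \<forall>x\<in>{0..L}. \<forall>t\<in>{0<..T}.
                     \<bar>y x t\<bar> \<le> C * (1 + t powr \<alpha>) \<and>
                     \<bar>yt x t\<bar> \<le> C * (1 + t powr (\<alpha> - 1)) \<and>
                     \<bar>ytt x t\<bar> \<le> C * (1 + t powr (\<alpha> - 2))"
    \<comment> \<open>the fractional PDE\<close>
    and pde_int: "\<And>x t. x \<in> {0<..<L} \<Longrightarrow> t \<in> {0<..T} \<Longrightarrow>
               (\<lambda>s. (t - s) powr (-\<alpha>) * yt x s) integrable_on {0..t}"
    and pde: "\<And>x t. x \<in> {0<..<L} \<Longrightarrow> t \<in> {0<..T} \<Longrightarrow>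
               caputo \<alpha> (\<lambda>s. yt x s) t = - v * y1 x t + D * y2 x t + exp (lam * t) * f x t"
    and init: "\<And>x. x \<in> {0..L} \<Longrightarrow> y x 0 = g x"
    and bdry: "\<And>t. t \<in> {0..T} \<Longrightarrow> y 0 t = 0 \<and> y L t = 0"
  shows "\<exists>C>0. \<forall>n K Y. 1 \<le> n \<longrightarrow> 2 \<le> K \<longrightarrow>
           is_scheme_solution \<alpha> lam v D T L r f g n K Y \<longrightarrow>
           (\<forall>l\<in>{1..n}.
              Max ((\<lambda>i. \<bar>y (real i * (L / real K)) (tmesh T r n l) - Y i l\<bar>) ` {1..K-1})
              \<le> C * (real n powr (- min (2 - \<alpha>) (r * \<alpha>)) + (L / real K)^2))"
proof -
  interpret setting \<alpha> lam v D T L r f g y yt ytt y1 y2 y3 y4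
    by (unfold_locales) (fact assms)+
  have Cpos: "0 < Cfin"
  proof -
    have "0 \<le> \<bar>tfun.Kt T r \<alpha> C0\<bar> + Gamma (1 - \<alpha>) * T powr \<alpha> * (v * M3 + 2 * D * M4)"
      using a1 vpos Dpos M34 by (intro add_nonneg_nonneg mult_nonneg_nonneg) auto
    moreover have "0 \<le> 1 + sqrt (L * v / (2 * D))" using Lpos vpos Dpos by simp
    ultimately have "0 \<le> (1 + sqrt (L * v / (2 * D))) * (\<bar>tfun.Kt T r \<alpha> C0\<bar> + Gamma (1 - \<alpha>) * T powr \<alpha> * (v * M3 + 2 * D * M4))"
      by (intro mult_nonneg_nonneg)
    then show ?thesis unfolding Cfin_def by linarith
  qed
  show ?thesis
    by (rule exI[of _ Cfin]) (use Cpos final in auto)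
qed

end
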